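(* Let $f\in L^2(\mathbb T)$ be such that $\Omega_1(f;\delta)=O(\delta^{1/2+\eta})$ as $\delta\to0^+$ for some $\eta>0$. Then for Lebesgue almost every $\xi$, $$\lim_{N\to\infty}\frac1N\sum_{n=1}^N f(2^n\xi-\xi)=\int_{\mathbb T}f(x)\,dx.$$
   Context: $\mathbb T=\mathbb R/\mathbb Z$ with Lebesgue measure; functions on $\mathbb T$ are identified with $1$-periodic functions on $\mathbb R$. For $f\in L^1(\mathbb T)$, the $L^1$-modulus of continuity is $\Omega_1(f;\delta)=\int_{\mathbb T}|f(x+\delta)-f(x)|\,dx$. *)

theory Defs
  imports "HOL-Analysis.Analysis" "HOL-Library.Landau_Symbols"
begin

text \<open>Functions on the torus R/Z are identified with 1-periodic functions on R.\<close>
definition periodic1 :: "(real \<Rightarrow> 'a) \<Rightarrow> bool" where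
  "periodic1 f \<longleftrightarrow> (\<forall>x. f (x + 1) = f x)"

definition in_L2_torus :: "(real \<Rightarrow> complex) \<Rightarrow> bool" where
  "in_L2_torus f \<longleftrightarrow> periodic1 f \<and> f \<in> borel_measurable lebesgue \<and>
     set_integrable lebesgue {0..1} (\<lambda>x. (cmod (f x))\<^sup>2)"

definition L1_modulus :: "(real \<Rightarrow> complex) \<Rightarrow> real \<Rightarrow> real" where
  "L1_modulus f \<delta> = (LINT x:{0..1}|lebesgue. cmod (f (x + \<delta>) - f x))"

end

theory Submission
  imports Defs
begin


definition P :: "real measure" where
  "P = density lborel (\<lambda>x. ennreal (indicator {0..<1} x))"

lemma sets_P[simp, measurable_cong]: "sets P = sets borel"
  by (simp add: P_def)

lemma space_P[simp]: "space P = UNIV"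
  by (simp add: P_def)

lemma emeasure_P_UNIV: "emeasure P UNIV = 1"
  unfolding P_def by (simp add: emeasure_density ennreal_indicator)

lemma finite_measure_P: "finite_measure P"
  by (rule finite_measureI) (simp add: emeasure_P_UNIV)

interpretation PP: finite_measure P by (rule finite_measure_P)

lemma measure_P_UNIV: "measure P UNIV = 1"
  by (simp add: measure_def emeasure_P_UNIV)

lemma nn_integral_P:
  "(\<integral>\<^sup>+x. u x \<partial>P) = (\<integral>\<^sup>+x. indicator {0..<1} x * u x \<partial>lborel)"
  if [measurable]: "u \<in> borel_measurable borel"
  unfolding P_def by (subst nn_integral_density) (auto simp: ennreal_indicator)

lemma per_int:
  assumes "periodic1 u" shows "u (x + of_int k) = u x"
proof -
  have A: "u (y + 1) = u y" for y using assms by (simp add: periodic1_def)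
  have "u (x + of_nat n) = u x" for n x
    by (induction n arbitrary: x) (auto simp: A add.assoc[symmetric])
  moreover have "u (x - of_nat n) = u x" for n
    using \<open>\<And>n x. u (x + of_nat n) = u x\<close>[of "x - of_nat n" n] by simp
  ultimately show ?thesis
  proof (cases "k \<ge> 0")
    case True
    then have "of_int k = real (nat k)" by simp
    then show ?thesis using \<open>\<And>n x. u (x + of_nat n) = u x\<close> by metis
  next
    case False
    then have "of_int k = - real (nat (-k))" by simp
    then show ?thesis using \<open>\<And>n. u (x - of_nat n) = u x\<close> by (metis diff_conv_add_uminus)
  qed
qed

lemma nn_translate:
  fixes u :: "real \<Rightarrow> ennreal" assumes [measurable]: "u \<in> borel_measurable borel"
  shows "(\<integral>\<^sup>+x. indicator {a+t..<b+t} x * u x \<partial>lborel)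
       = (\<integral>\<^sup>+x. indicator {a..<b} x * u (x + t) \<partial>lborel)"
proof -
  have "(\<integral>\<^sup>+x. indicator {a+t..<b+t} x * u x \<partial>lborel)
      = (\<integral>\<^sup>+x. indicator {a+t..<b+t} (t + 1 * x) * u (t + 1 * x) \<partial>lborel)"
    using nn_integral_real_affine[of "\<lambda>x. indicator {a+t..<b+t} x * u x" 1 t] by simp
  also have "\<dots> = (\<integral>\<^sup>+x. indicator {a..<b} x * u (x + t) \<partial>lborel)"
    by (intro nn_integral_cong) (auto simp: indicator_def algebra_simps)
  finally show ?thesis .
qed

lemma nn_split:
  fixes u :: "real \<Rightarrow> ennreal" assumes [measurable]: "u \<in> borel_measurable borel"
    and "a \<le> b" "b \<le> c"
  shows "(\<integral>\<^sup>+x. indicator {a..<c} x * u x \<partial>lborel)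
       = (\<integral>\<^sup>+x. indicator {a..<b} x * u x \<partial>lborel) + (\<integral>\<^sup>+x. indicator {b..<c} x * u x \<partial>lborel)"
proof -
  have "(\<integral>\<^sup>+x. indicator {a..<c} x * u x \<partial>lborel)
      = (\<integral>\<^sup>+x. indicator {a..<b} x * u x + indicator {b..<c} x * u x \<partial>lborel)"
    using assms(2,3) by (intro nn_integral_cong) (auto simp: indicator_def)
  also have "\<dots> = (\<integral>\<^sup>+x. indicator {a..<b} x * u x \<partial>lborel) + (\<integral>\<^sup>+x. indicator {b..<c} x * u x \<partial>lborel)"
    by (rule nn_integral_add) auto
  finally show ?thesis .
qed

lemma per_interval:
  fixes u :: "real \<Rightarrow> ennreal" assumes [measurable]: "u \<in> borel_measurable borel"
    and per: "periodic1 u"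
  shows "(\<integral>\<^sup>+x. indicator {c..<c+1} x * u x \<partial>lborel)
       = (\<integral>\<^sup>+x. indicator {0..<1} x * u x \<partial>lborel)"
proof -
  define n where "n = \<lfloor>c\<rfloor>"
  define r where "r = c - of_int n"
  have r: "0 \<le> r" "r < 1" unfolding r_def n_def by linarith+
  have c: "c = r + of_int n" by (simp add: r_def)
  have "(\<integral>\<^sup>+x. indicator {c..<c+1} x * u x \<partial>lborel)
     = (\<integral>\<^sup>+x. indicator {r + of_int n..<1 + of_int n} x * u x \<partial>lborel)
     + (\<integral>\<^sup>+x. indicator {0 + (of_int n + 1)..<r + (of_int n + 1)} x * u x \<partial>lborel)"
    unfolding c using r by (subst nn_split[where b="1 + of_int n"]) (auto simp: algebra_simps)
  also have "\<dots> = (\<integral>\<^sup>+x. indicator {r..<1} x * u (x + of_int n) \<partial>lborel)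
     + (\<integral>\<^sup>+x. indicator {0..<r} x * u (x + of_int (n + 1)) \<partial>lborel)"
    by (subst (1 2) nn_translate) auto
  also have "\<dots> = (\<integral>\<^sup>+x. indicator {r..<1} x * u x \<partial>lborel)
     + (\<integral>\<^sup>+x. indicator {0..<r} x * u x \<partial>lborel)"
    using per_int[OF per, of _ n] per_int[OF per, of _ "n+1"] by simp
  also have "\<dots> = (\<integral>\<^sup>+x. indicator {0..<1} x * u x \<partial>lborel)"
    using r by (subst nn_split[where b=r]) (auto simp: add.commute)
  finally show ?thesis .
qed

lemma per_shift_nn:
  fixes u :: "real \<Rightarrow> ennreal" assumes [measurable]: "u \<in> borel_measurable borel"
    and per: "periodic1 u"
  shows "(\<integral>\<^sup>+x. u (x + c) \<partial>P) = (\<integral>\<^sup>+x. u x \<partial>P)"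
proof -
  have "(\<integral>\<^sup>+x. u (x + c) \<partial>P) = (\<integral>\<^sup>+x. indicator {0..<1} x * u (x + c) \<partial>lborel)"
    by (subst nn_integral_P) auto
  also have "\<dots> = (\<integral>\<^sup>+x. indicator {0+c..<1+c} x * u x \<partial>lborel)"
    by (subst nn_translate) auto
  also have "\<dots> = (\<integral>\<^sup>+x. indicator {0..<1} x * u x \<partial>lborel)"
    using per_interval[OF assms, of c] by (simp add: add.commute)
  finally show ?thesis by (simp add: nn_integral_P)
qed

lemma per_multiple:
  fixes u :: "real \<Rightarrow> ennreal" assumes [measurable]: "u \<in> borel_measurable borel"
    and per: "periodic1 u"
  shows "(\<integral>\<^sup>+x. indicator {0..<real k} x * u x \<partial>lborel)
       = of_nat k * (\<integral>\<^sup>+x. indicator {0..<1} x * u x \<partial>lborel)"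
proof (induction k)
  case 0 then show ?case by simp
next
  case (Suc k)
  have e1: "(\<integral>\<^sup>+x. indicator {0..<real (Suc k)} x * u x \<partial>lborel)
     = (\<integral>\<^sup>+x. indicator {0..<real k} x * u x \<partial>lborel)
       + (\<integral>\<^sup>+x. indicator {real k..<real k + 1} x * u x \<partial>lborel)"
    using nn_split[OF assms(1), of 0 "real k" "real k + 1"] by (simp add: add.commute)
  have e2: "(\<integral>\<^sup>+x. indicator {real k..<real k + 1} x * u x \<partial>lborel)
       = (\<integral>\<^sup>+x. indicator {0..<1} x * u x \<partial>lborel)"
    by (rule per_interval[OF assms])
  show ?case unfolding e1 e2 Suc by (simp add: distrib_right)
qed

lemma ennreal_cancel_nat:
  fixes X Y :: ennreal assumes "k > 0" "of_nat k * X = of_nat k * Y" shows "X = Y"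
proof -
  have "ennreal (1 / real k) * of_nat k = 1"
    using assms(1) by (simp add: ennreal_of_nat_eq_real_of_nat ennreal_mult[symmetric])
  then have "X = ennreal (1 / real k) * (of_nat k * X)" "Y = ennreal (1 / real k) * (of_nat k * Y)"
    by (simp_all add: mult.assoc[symmetric])
  then show ?thesis using assms(2) by simp
qed

lemma per_scale_nn:
  fixes u :: "real \<Rightarrow> ennreal" assumes [measurable]: "u \<in> borel_measurable borel"
    and per: "periodic1 u" and k: "k > 0"
  shows "(\<integral>\<^sup>+x. u (real k * x) \<partial>P) = (\<integral>\<^sup>+x. u x \<partial>P)"
proof -
  have kk: "real k \<noteq> 0" using k by simp
  have "(\<integral>\<^sup>+x. indicator {0..<real k} x * u x \<partial>lborel)
      = \<bar>real k\<bar> * (\<integral>\<^sup>+x. indicator {0..<real k} (0 + real k * x) * u (0 + real k * x) \<partial>lborel)"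
    by (rule nn_integral_real_affine[OF _ kk]) auto
  also have "(\<integral>\<^sup>+x. indicator {0..<real k} (0 + real k * x) * u (0 + real k * x) \<partial>lborel)
     = (\<integral>\<^sup>+x. indicator {0..<1} x * u (real k * x) \<partial>lborel)"
    using k by (intro nn_integral_cong) (auto simp: indicator_def zero_le_mult_iff)
  finally have X: "(\<integral>\<^sup>+x. indicator {0..<real k} x * u x \<partial>lborel)
     = ennreal \<bar>real k\<bar> * (\<integral>\<^sup>+x. indicator {0..<1} x * u (real k * x) \<partial>lborel)" .
  have "of_nat k * (\<integral>\<^sup>+x. indicator {0..<1} x * u x \<partial>lborel)
     = of_nat k * (\<integral>\<^sup>+x. indicator {0..<1} x * u (real k * x) \<partial>lborel)"
    using X per_multiple[OF assms(1,2), of k] by (simp only: abs_of_nat ennreal_of_nat_eq_real_of_nat)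
  from ennreal_cancel_nat[OF k this]
  have "(\<integral>\<^sup>+x. indicator {0..<1} x * u x \<partial>lborel)
     = (\<integral>\<^sup>+x. indicator {0..<1} x * u (real k * x) \<partial>lborel)" .
  then show ?thesis by (simp add: nn_integral_P)
qed


lemma periodic1_shift: assumes "periodic1 u" shows "periodic1 (\<lambda>x. u (x + c))"
  unfolding periodic1_def
proof
  fix x
  have "u ((x + c) + 1) = u (x + c)" using assms by (simp add: periodic1_def)
  then show "u (x + 1 + c) = u (x + c)" by (metis add.commute add.left_commute)
qed

lemma periodic1_scale: assumes "periodic1 u" shows "periodic1 (\<lambda>x. u (real k * x))"
  unfolding periodic1_def
proof
  fix x
  have "u (real k * x + real_of_int (int k)) = u (real k * x)" by (rule per_int[OF assms])
  then show "u (real k * (x + 1)) = u (real k * x)" by (simp add: distrib_left)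
qed

lemma periodic1_comp: "periodic1 u \<Longrightarrow> periodic1 (\<lambda>x. g (u x))"
  by (simp add: periodic1_def)

lemma periodic1_comp2: "periodic1 u \<Longrightarrow> periodic1 v \<Longrightarrow> periodic1 (\<lambda>x. g (u x) (v x))"
  by (simp add: periodic1_def)

lemma aff_nn:
  fixes u :: "real \<Rightarrow> ennreal" assumes [measurable]: "u \<in> borel_measurable borel"
    and per: "periodic1 u" and k: "k > 0"
  shows "(\<integral>\<^sup>+x. u (real k * x + c) \<partial>P) = (\<integral>\<^sup>+x. u x \<partial>P)"
proof -
  have "(\<integral>\<^sup>+x. u (real k * x + c) \<partial>P) = (\<integral>\<^sup>+x. u (x + c) \<partial>P)"
    using per_scale_nn[of "\<lambda>y. u (y + c)" k] periodic1_shift[OF per] k by simp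
  also have "\<dots> = (\<integral>\<^sup>+x. u x \<partial>P)" by (rule per_shift_nn[OF assms(1,2)])
  finally show ?thesis .
qed

lemma aff_integrable:
  fixes u :: "real \<Rightarrow> real" assumes [measurable]: "u \<in> borel_measurable borel"
    and per: "periodic1 u" and k: "k > 0"
  shows "integrable P (\<lambda>x. u (real k * x + c)) \<longleftrightarrow> integrable P u"
proof -
  have "(\<integral>\<^sup>+x. ennreal (norm (u (real k * x + c))) \<partial>P) = (\<integral>\<^sup>+x. ennreal (norm (u x)) \<partial>P)"
    using aff_nn[of "\<lambda>x. ennreal (norm (u x))" k c] per k by (simp add: periodic1_def)
  then show ?thesis by (simp add: integrable_iff_bounded)
qed

lemma aff_integral:
  fixes u :: "real \<Rightarrow> real" assumes [measurable]: "u \<in> borel_measurable borel"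
    and per: "periodic1 u" and k: "k > 0"
  shows "(\<integral>x. u (real k * x + c) \<partial>P) = (\<integral>x. u x \<partial>P)"
proof (cases "integrable P u")
  case True
  then have T2: "integrable P (\<lambda>x. u (real k * x + c))" using aff_integrable[OF assms] by simp
  have e1: "(\<integral>\<^sup>+x. ennreal (u (real k * x + c)) \<partial>P) = (\<integral>\<^sup>+x. ennreal (u x) \<partial>P)"
    using aff_nn[of "\<lambda>x. ennreal (u x)" k c] per k by (simp add: periodic1_def)
  have e2: "(\<integral>\<^sup>+x. ennreal (- u (real k * x + c)) \<partial>P) = (\<integral>\<^sup>+x. ennreal (- u x) \<partial>P)"
    using aff_nn[of "\<lambda>x. ennreal (- u x)" k c] per k by (simp add: periodic1_def)
  show ?thesis using e1 e2 by (simp add: real_lebesgue_integral_def[OF True] real_lebesgue_integral_def[OF T2])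
next
  case False
  then have "\<not> integrable P (\<lambda>x. u (real k * x + c))" using aff_integrable[OF assms] by simp
  then show ?thesis using False by (simp add: not_integrable_integral_eq)
qed

lemma shift_integrable:
  fixes u :: "real \<Rightarrow> real" assumes [measurable]: "u \<in> borel_measurable borel"
    and per: "periodic1 u"
  shows "integrable P (\<lambda>x. u (x + c)) \<longleftrightarrow> integrable P u"
  using aff_integrable[OF assms, of 1 c] by simp

lemma shift_integral:
  fixes u :: "real \<Rightarrow> real" assumes [measurable]: "u \<in> borel_measurable borel"
    and per: "periodic1 u"
  shows "(\<integral>x. u (x + c) \<partial>P) = (\<integral>x. u x \<partial>P)"
  using aff_integral[OF assms, of 1 c] by simp

lemma scale_integrable:
  fixes u :: "real \<Rightarrow> real" assumes [measurable]: "u \<in> borel_measurable borel"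
    and per: "periodic1 u" and k: "k > 0"
  shows "integrable P (\<lambda>x. u (real k * x)) \<longleftrightarrow> integrable P u"
  using aff_integrable[OF assms, of 0] by simp

lemma scale_integral:
  fixes u :: "real \<Rightarrow> real" assumes [measurable]: "u \<in> borel_measurable borel"
    and per: "periodic1 u" and k: "k > 0"
  shows "(\<integral>x. u (real k * x) \<partial>P) = (\<integral>x. u x \<partial>P)"
  using aff_integral[OF assms, of 0] by simp

lemma AE_P: "AE t in P. 0 \<le> t \<and> t < 1"
  unfolding P_def by (subst AE_density) (auto simp: indicator_def)

lemma nn_P_bound:
  fixes F :: "real \<Rightarrow> ennreal"
  assumes "\<And>t. 0 \<le> t \<Longrightarrow> t < 1 \<Longrightarrow> F t \<le> c"
  shows "(\<integral>\<^sup>+t. F t \<partial>P) \<le> c"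
proof -
  have "AE t in P. F t \<le> c" using AE_P by eventually_elim (use assms in blast)
  then have "(\<integral>\<^sup>+t. F t \<partial>P) \<le> (\<integral>\<^sup>+t. c \<partial>P)" by (rule nn_integral_mono_AE)
  also have "(\<integral>\<^sup>+t. c \<partial>P) = c * emeasure P (space P)" by (rule nn_integral_const)
  also have "\<dots> = c" by (simp add: emeasure_P_UNIV)
  finally show ?thesis .
qed

lemma P_bound:
  fixes F :: "real \<Rightarrow> real"
  assumes [measurable]: "F \<in> borel_measurable borel" 
    and "\<And>t. 0 \<le> t \<Longrightarrow> t < 1 \<Longrightarrow> \<bar>F t\<bar> \<le> c"
  shows "integrable P F" "\<bar>\<integral>t. F t \<partial>P\<bar> \<le> c"
proof -
  have ae: "AE t in P. \<bar>F t\<bar> \<le> c" using AE_P by eventually_elim (use assms in blast)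
  show I: "integrable P F"
    by (rule PP.integrable_const_bound[where B=c]) (use ae in auto)
  have "\<bar>\<integral>t. F t \<partial>P\<bar> \<le> (\<integral>t. \<bar>F t\<bar> \<partial>P)" by (rule integral_abs_bound)
  also have "\<dots> \<le> (\<integral>t. c \<partial>P)"
    by (rule integral_mono_AE) (use I ae in auto)
  also have "(\<integral>t. c \<partial>P) = c" by (simp add: measure_P_UNIV)
  finally show "\<bar>\<integral>t. F t \<partial>P\<bar> \<le> c" .
qed

lemma GC:
  fixes g :: "real \<Rightarrow> real"
  assumes [measurable]: "g \<in> borel_measurable borel" and nn: "\<And>x. 0 \<le> g x"
    and b: "(\<integral>\<^sup>+x. ennreal (g x) \<partial>P) \<le> ennreal c" and c: "0 \<le> c"
  shows "integrable P g" "(\<integral>x. g x \<partial>P) \<le> c"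
proof -
  have "(\<integral>\<^sup>+x. ennreal (g x) \<partial>P) < \<infinity>"
    using le_less_trans[OF b ennreal_less_top[of c]] by (simp add: infinity_ennreal_def)
  then show I: "integrable P g"
    using nn by (auto simp: integrable_iff_bounded)
  have "ennreal (\<integral>x. g x \<partial>P) = (\<integral>\<^sup>+x. ennreal (g x) \<partial>P)"
    using I nn by (subst nn_integral_eq_integral) auto
  then have "ennreal (\<integral>x. g x \<partial>P) \<le> ennreal c" using b by simp
  then show "(\<integral>x. g x \<partial>P) \<le> c" using c by (simp add: ennreal_le_iff)
qed

lemma GC2:
  fixes g :: "real \<Rightarrow> real"
  assumes "integrable P g" "\<And>x. 0 \<le> g x"
  shows "(\<integral>\<^sup>+x. ennreal (g x) \<partial>P) = ennreal (\<integral>x. g x \<partial>P)"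
  using assms by (subst nn_integral_eq_integral) auto

lemma AFF_nn:
  fixes u :: "real \<Rightarrow> ennreal" assumes [measurable]: "u \<in> borel_measurable borel" and s: "s > 0"
  shows "ennreal s * (\<integral>\<^sup>+t. u (y + s * t) \<partial>P) = (\<integral>\<^sup>+x. indicator {y..<y+s} x * u x \<partial>lborel)"
proof -
  have "(\<integral>\<^sup>+x. indicator {y..<y+s} x * u x \<partial>lborel)
      = ennreal \<bar>s\<bar> * (\<integral>\<^sup>+t. indicator {y..<y+s} (y + s * t) * u (y + s * t) \<partial>lborel)"
    using s by (intro nn_integral_real_affine) auto
  also have "(\<integral>\<^sup>+t. indicator {y..<y+s} (y + s * t) * u (y + s * t) \<partial>lborel)
      = (\<integral>\<^sup>+t. indicator {0..<1} t * u (y + s * t) \<partial>lborel)"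
    using s by (intro nn_integral_cong) (auto simp: indicator_def zero_le_mult_iff)
  finally show ?thesis using s by (simp add: nn_integral_P)
qed

lemma AFF:
  fixes g :: "real \<Rightarrow> real" assumes [measurable]: "g \<in> borel_measurable borel" and s: "s > 0"
  shows "s * (\<integral>t. g (y + s * t) \<partial>P) = (\<integral>x. indicator {y..<y+s} x * g x \<partial>lborel)"
proof -
  have "(\<integral>x. indicator {y..<y+s} x * g x \<partial>lborel)
      = \<bar>s\<bar> *\<^sub>R (\<integral>t. indicator {y..<y+s} (y + s * t) * g (y + s * t) \<partial>lborel)"
    using s by (intro lborel_integral_real_affine) auto
  also have "(\<integral>t. indicator {y..<y+s} (y + s * t) * g (y + s * t) \<partial>lborel)
      = (\<integral>t. indicator {0..<1} t * g (y + s * t) \<partial>lborel)"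
    using s by (intro Bochner_Integration.integral_cong) (auto simp: indicator_def zero_le_mult_iff)
  also have "\<dots> = (\<integral>t. g (y + s * t) \<partial>P)"
    unfolding P_def by (subst integral_density) auto
  finally show ?thesis using s by simp
qed

lemma NL1:
  fixes u :: "real \<Rightarrow> ennreal" assumes [measurable]: "u \<in> borel_measurable borel"
    and per: "periodic1 u" and s: "0 < s" "s \<le> 1"
  shows "(\<integral>\<^sup>+t. u (y + s * t) \<partial>P) \<le> ennreal (1/s) * (\<integral>\<^sup>+x. u x \<partial>P)"
proof -
  have "ennreal s * (\<integral>\<^sup>+t. u (y + s * t) \<partial>P) \<le> (\<integral>\<^sup>+x. indicator {y..<y+1} x * u x \<partial>lborel)"
    unfolding AFF_nn[OF assms(1) s(1)] using s
    by (intro nn_integral_mono) (auto simp: indicator_def)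
  also have "\<dots> = (\<integral>\<^sup>+x. u x \<partial>P)"
    using per_interval[OF assms(1,2), of y] by (simp add: nn_integral_P)
  finally have *: "ennreal s * (\<integral>\<^sup>+t. u (y + s * t) \<partial>P) \<le> (\<integral>\<^sup>+x. u x \<partial>P)" .
  have "ennreal (1/s) * ennreal s = ennreal (1/s * s)" by (rule ennreal_mult[symmetric]) (use s in auto)
  then have "ennreal (1/s) * ennreal s = 1" using s by simp
  then have "(\<integral>\<^sup>+t. u (y + s * t) \<partial>P) = ennreal (1/s) * (ennreal s * (\<integral>\<^sup>+t. u (y + s * t) \<partial>P))"
    by (simp add: mult.assoc[symmetric])
  also have "\<dots> \<le> ennreal (1/s) * (\<integral>\<^sup>+x. u x \<partial>P)"
    by (intro mult_left_mono *) auto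
  finally show ?thesis .
qed

lemma AE_tendsto_summable:
  fixes F :: "nat \<Rightarrow> real \<Rightarrow> real" and c :: "nat \<Rightarrow> real"
  assumes [measurable]: "\<And>j. F j \<in> borel_measurable borel" and nn: "\<And>j x. 0 \<le> F j x"
    and b: "\<And>j. (\<integral>\<^sup>+x. ennreal (F j x) \<partial>P) \<le> ennreal (c j)" and sc: "summable c"
    and c0: "\<And>j. 0 \<le> c j"
  shows "AE x in P. (\<lambda>j. F j x) \<longlonglongrightarrow> 0"
proof -
  have "(\<integral>\<^sup>+x. (\<Sum>j. ennreal (F j x)) \<partial>P) = (\<Sum>j. \<integral>\<^sup>+x. ennreal (F j x) \<partial>P)"
    by (rule nn_integral_suminf) auto
  also have "\<dots> \<le> (\<Sum>j. ennreal (c j))"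
    by (intro suminf_le b) auto
  also have "\<dots> = ennreal (\<Sum>j. c j)"
    by (rule suminf_ennreal2[OF c0 sc])
  finally have "(\<integral>\<^sup>+x. (\<Sum>j. ennreal (F j x)) \<partial>P) \<noteq> \<infinity>"
    using ennreal_less_top by (metis infinity_ennreal_def le_less_trans less_irrefl)
  then have "AE x in P. (\<Sum>j. ennreal (F j x)) \<noteq> \<infinity>"
    by (intro nn_integral_PInf_AE) auto
  then show ?thesis
  proof (rule eventually_mono)
    fix x assume "(\<Sum>j. ennreal (F j x)) \<noteq> \<infinity>"
    then have "summable (\<lambda>j. F j x)"
      using nn by (intro summable_suminf_not_top) auto
    then show "(\<lambda>j. F j x) \<longlonglongrightarrow> 0" by (rule summable_LIMSEQ_zero)
  qed
qed


interpretation PP2: pair_sigma_finite P P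
  by (simp add: pair_sigma_finite.intro PP.sigma_finite_measure_axioms)

locale hyp =
  fixes h :: "real \<Rightarrow> real" and C \<alpha> :: real
  assumes hm[measurable]: "h \<in> borel_measurable borel"
    and per: "periodic1 h"
    and L2: "integrable P (\<lambda>x. (h x)^2)"
    and alpha: "1/2 < \<alpha>"
    and C0: "0 \<le> C"
    and modc: "\<And>\<delta>. 0 < \<delta> \<Longrightarrow> \<delta> \<le> 1 \<Longrightarrow>
        (\<integral>\<^sup>+x. ennreal \<bar>h (x + \<delta>) - h x\<bar> \<partial>P) \<le> ennreal (C * \<delta> powr \<alpha>)"
begin

definition "H = (\<integral>x. (h x)^2 \<partial>P)"
definition "B = sqrt (H + 1)"
definition "avg s y = (\<integral>t. h (y + s * t) \<partial>P)"

lemma amgm: fixes x l :: real assumes l: "0 < l" shows "\<bar>x\<bar> \<le> (l * x^2 + 1 / l) / 2"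
proof -
  have e: "(l * \<bar>x\<bar> - 1)^2 = l^2 * x^2 - 2*l*\<bar>x\<bar> + 1"
    by (simp add: power2_eq_square algebra_simps abs_mult_self_eq)
  have "0 \<le> (l * \<bar>x\<bar> - 1)^2" by simp
  then have *: "2*l*\<bar>x\<bar> \<le> l^2 * x^2 + 1" using e by linarith
  have eq: "(l * x^2 + 1 / l) / 2 = (l^2 * x^2 + 1) / (2 * l)"
    using l by (simp add: field_simps power2_eq_square)
  have "\<bar>x\<bar> \<le> (l^2 * x^2 + 1) / (2 * l)"
    using l * by (simp add: pos_le_divide_eq mult.commute mult.left_commute)
  then show ?thesis unfolding eq .
qed

lemma abs_le_sq: fixes x :: real shows "\<bar>x\<bar> \<le> 1 + x^2"
  using amgm[of 1 x] by simp

lemma H0: "0 \<le> H" unfolding H_def by simp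

lemma B1: "1 \<le> B" unfolding B_def using H0 by simp

lemma BB: "B * B = H + 1" unfolding B_def using H0 by simp

lemma hint: "integrable P h"
proof (rule Bochner_Integration.integrable_bound)
  show "integrable P (\<lambda>x. 1 + (h x)^2)" using L2 by simp
  show "AE x in P. norm (h x) \<le> norm (1 + (h x)^2)"
  proof (rule AE_I2)
    fix x
    have "\<bar>h x\<bar> \<le> 1 + (h x)^2" by (rule abs_le_sq)
    then show "norm (h x) \<le> norm (1 + (h x)^2)" by simp
  qed
qed simp

lemma sq_shift:
  assumes s: "0 < s" "s \<le> 1"
  shows "integrable P (\<lambda>t. (h (y + s * t))^2)" "(\<integral>t. (h (y + s * t))^2 \<partial>P) \<le> H / s"
proof -
  have "(\<integral>\<^sup>+t. ennreal ((h (y + s * t))^2) \<partial>P) \<le> ennreal (1/s) * (\<integral>\<^sup>+x. ennreal ((h x)^2) \<partial>P)"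
    by (rule NL1[OF _ _ s]) (auto simp: periodic1_def per[unfolded periodic1_def])
  also have "(\<integral>\<^sup>+x. ennreal ((h x)^2) \<partial>P) = ennreal H"
    unfolding H_def by (rule GC2[OF L2]) simp
  also have "ennreal (1/s) * ennreal H = ennreal (H / s)"
    using s H0 by (simp add: ennreal_mult[symmetric])
  finally have *: "(\<integral>\<^sup>+t. ennreal ((h (y + s * t))^2) \<partial>P) \<le> ennreal (H / s)" .
  show "integrable P (\<lambda>t. (h (y + s * t))^2)" by (rule GC(1)[OF _ _ *]) (use H0 s in auto)
  show "(\<integral>t. (h (y + s * t))^2 \<partial>P) \<le> H / s" by (rule GC(2)[OF _ _ *]) (use H0 s in auto)
qed

lemma AV1:
  assumes s: "0 < s" "s \<le> 1"
  shows "integrable P (\<lambda>t. h (y + s * t))" "(\<integral>t. \<bar>h (y + s * t)\<bar> \<partial>P) \<le> B / sqrt s"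
    "\<bar>avg s y\<bar> \<le> B / sqrt s"
proof -
  define l where "l = sqrt s / B"
  have l: "0 < l" unfolding l_def using s B1 by simp
  note I2 = sq_shift[OF s, of y]
  have Ib: "integrable P (\<lambda>t. (l * (h (y + s * t))^2 + 1 / l) / 2)"
    using I2(1) by simp
  show I: "integrable P (\<lambda>t. h (y + s * t))"
  proof (rule Bochner_Integration.integrable_bound[OF Ib])
    show "AE t in P. norm (h (y + s * t)) \<le> norm ((l * (h (y + s * t))^2 + 1 / l) / 2)"
    proof (rule AE_I2)
      fix t
      have "\<bar>h (y + s * t)\<bar> \<le> (l * (h (y + s * t))^2 + 1 / l) / 2" by (rule amgm[OF l])
      moreover have "0 \<le> (l * (h (y + s * t))^2 + 1 / l) / 2" using l by simp
      ultimately show "norm (h (y + s * t)) \<le> norm ((l * (h (y + s * t))^2 + 1 / l) / 2)" by simp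
    qed
  qed simp
  have "(\<integral>t. \<bar>h (y + s * t)\<bar> \<partial>P) \<le> (\<integral>t. (l * (h (y + s * t))^2 + 1 / l) / 2 \<partial>P)"
    by (intro integral_mono Ib amgm l) (use I in auto)
  also have "\<dots> = (l * (\<integral>t. (h (y + s * t))^2 \<partial>P) + 1 / l) / 2"
    using I2(1) by (simp add: measure_P_UNIV)
  also have "\<dots> \<le> (l * (H / s) + 1 / l) / 2"
  proof -
    have "l * (\<integral>t. (h (y + s * t))^2 \<partial>P) \<le> l * (H / s)" by (rule mult_left_mono[OF I2(2)]) (use l in simp)
    then show ?thesis by (intro divide_right_mono add_right_mono) auto
  qed
  also have "\<dots> \<le> (l * ((H + 1) / s) + 1 / l) / 2"
    using l s by (simp add: divide_right_mono mult_left_mono)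
  also have "l * ((H + 1) / s) = B / sqrt s"
  proof -
    have ss: "sqrt s * sqrt s = s" using s by simp
    have "l * ((H + 1) / s) = sqrt s * (B * B) / (B * s)" unfolding l_def BB[symmetric] by simp
    also have "\<dots> = sqrt s * B / s" using B1 by simp
    also have "\<dots> = B / sqrt s" using s by (subst ss[symmetric]) (simp add: field_simps)
    finally show ?thesis .
  qed
  also have "1 / l = B / sqrt s" unfolding l_def by simp
  finally show A: "(\<integral>t. \<bar>h (y + s * t)\<bar> \<partial>P) \<le> B / sqrt s" by simp
  show "\<bar>avg s y\<bar> \<le> B / sqrt s"
    unfolding avg_def using integral_abs_bound A by (rule order.trans)
qed

lemma avg_meas[measurable]: "avg s \<in> borel_measurable borel"
  unfolding avg_def[abs_def] by measurable


lemma AV2: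
  assumes s: "0 < s" "s \<le> 1"
  shows "(\<integral>\<^sup>+y. ennreal \<bar>avg s y - h y\<bar> \<partial>P) \<le> ennreal (C * s powr \<alpha>)"
proof -
  have pt: "ennreal \<bar>avg s y - h y\<bar> \<le> (\<integral>\<^sup>+t. ennreal \<bar>h (y + s*t) - h y\<bar> \<partial>P)" for y
  proof -
    have I: "integrable P (\<lambda>t. h (y + s*t) - h y)" using AV1(1)[OF s, of y] by simp
    have "avg s y - h y = (\<integral>t. h (y + s*t) - h y \<partial>P)"
      unfolding avg_def using AV1(1)[OF s, of y] by (simp add: measure_P_UNIV)
    then show ?thesis using integral_norm_bound_ennreal[OF I] by simp
  qed
  have "(\<integral>\<^sup>+y. ennreal \<bar>avg s y - h y\<bar> \<partial>P) \<le> (\<integral>\<^sup>+y. \<integral>\<^sup>+t. ennreal \<bar>h (y + s*t) - h y\<bar> \<partial>P \<partial>P)"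
    by (intro nn_integral_mono pt)
  also have "\<dots> = (\<integral>\<^sup>+t. \<integral>\<^sup>+y. ennreal \<bar>h (y + s*t) - h y\<bar> \<partial>P \<partial>P)"
    by (rule PP2.Fubini') measurable
  also have "\<dots> \<le> ennreal (C * s powr \<alpha>)"
  proof (rule nn_P_bound)
    fix t :: real assume t: "0 \<le> t" "t < 1"
    show "(\<integral>\<^sup>+y. ennreal \<bar>h (y+s*t) - h y\<bar> \<partial>P) \<le> ennreal (C * s powr \<alpha>)"
    proof (cases "t = 0")
      case True then show ?thesis by simp
    next
      case False
      then have d: "0 < s*t" "s*t \<le> 1" using s t by (auto simp: mult_le_one)
      have "(\<integral>\<^sup>+y. ennreal \<bar>h (y+s*t) - h y\<bar> \<partial>P) \<le> ennreal (C * (s*t) powr \<alpha>)" by (rule modc[OF d])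
      also have "(s*t) powr \<alpha> \<le> s powr \<alpha>"
        using alpha d s t by (intro powr_mono2) (auto simp: mult_left_le)
      then have "ennreal (C * (s*t) powr \<alpha>) \<le> ennreal (C * s powr \<alpha>)"
        using C0 by (intro ennreal_leI mult_left_mono) auto
      finally show ?thesis .
    qed
  qed
  finally show ?thesis .
qed

definition "I z w = (\<integral>x. indicator {z..<z+w} x * h x \<partial>lborel)"

lemma I_avg: "0 < s \<Longrightarrow> s * avg s z = I z s"
  unfolding avg_def I_def by (rule AFF) auto

lemma I_bound: assumes "0 < w" "w \<le> 1" shows "\<bar>I z w\<bar> \<le> B * sqrt w"
proof -
  have "I z w = w * avg w z" using I_avg[of w z] assms by simp
  then have "\<bar>I z w\<bar> = w * \<bar>avg w z\<bar>" using assms by (simp add: abs_mult)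
  also have "\<dots> \<le> w * (B / sqrt w)" using AV1(3)[OF assms] assms by (intro mult_left_mono) auto
  also have "w * (B / sqrt w) = B * (w / sqrt w)" by simp
  also have "w / sqrt w = sqrt w" using assms by (intro real_div_sqrt) auto
  finally show ?thesis .
qed

lemma ind_int: assumes w: "0 < w" "w \<le> 1" shows "integrable lborel (\<lambda>x. indicator {a..<a+w} x * h x)"
proof -
  have "(\<integral>\<^sup>+x. ennreal (norm (indicator {a..<a+w} x * h x)) \<partial>lborel)
      = (\<integral>\<^sup>+x. indicator {a..<a+w} x * ennreal \<bar>h x\<bar> \<partial>lborel)"
    by (intro nn_integral_cong) (auto simp: indicator_def)
  also have "\<dots> = ennreal w * (\<integral>\<^sup>+t. ennreal \<bar>h (a + w * t)\<bar> \<partial>P)"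
    by (rule AFF_nn[symmetric]) (use w in auto)
  also have "(\<integral>\<^sup>+t. ennreal \<bar>h (a + w * t)\<bar> \<partial>P) = ennreal (\<integral>t. \<bar>h (a + w * t)\<bar> \<partial>P)"
    by (rule GC2) (use AV1(1)[OF w, of a] in auto)
  finally have "(\<integral>\<^sup>+x. ennreal (norm (indicator {a..<a+w} x * h x)) \<partial>lborel) < \<infinity>"
    by (simp add: ennreal_mult_less_top)
  then show ?thesis by (simp add: integrable_iff_bounded)
qed

lemma AV3:
  assumes r: "0 \<le> r" "r \<le> 1" and s: "0 < s" "s \<le> 1"
  shows "\<bar>avg s (y + r) - avg s y\<bar> \<le> 2 * B * sqrt r / s"
proof (cases "s \<le> r")
  case True
  have "\<bar>avg s (y + r) - avg s y\<bar> \<le> B / sqrt s + B / sqrt s"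
    using AV1(3)[OF s, of "y + r"] AV1(3)[OF s, of y] by linarith
  also have "B / sqrt s \<le> B * sqrt r / s"
  proof -
    have "sqrt s * sqrt s \<le> sqrt s * sqrt r" using True s by (intro mult_left_mono) auto
    then have "s \<le> sqrt s * sqrt r" using s by simp
    then have "1 / sqrt s \<le> sqrt r / s" using s by (simp add: field_simps)
    then have "B * (1 / sqrt s) \<le> B * (sqrt r / s)" using B1 by (intro mult_left_mono) auto
    then show ?thesis by simp
  qed
  then have "B / sqrt s + B / sqrt s \<le> 2 * B * sqrt r / s" by simp
  finally show ?thesis .
next
  case False
  show ?thesis
  proof (cases "r = 0")
    case True then show ?thesis by simp
  next
    case r0: False
    then have r': "0 < r" "r \<le> 1" using r by auto
    have "s * (avg s (y + r) - avg s y) = I (y + r) s - I y s"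
      using I_avg[OF s(1)] by (simp add: algebra_simps)
    also have "\<dots> = (\<integral>x. indicator {y+r..<y+r+s} x * h x - indicator {y..<y+s} x * h x \<partial>lborel)"
      unfolding I_def by (rule Bochner_Integration.integral_diff[symmetric]) (use ind_int[OF s] in auto)
    also have "\<dots> = (\<integral>x. indicator {y+s..<y+s+r} x * h x - indicator {y..<y+r} x * h x \<partial>lborel)"
      using False r by (intro Bochner_Integration.integral_cong) (auto simp: indicator_def)
    also have "\<dots> = I (y + s) r - I y r"
      unfolding I_def by (rule Bochner_Integration.integral_diff) (use ind_int[OF r'] in auto)
    finally have "\<bar>s * (avg s (y + r) - avg s y)\<bar> \<le> \<bar>I (y + s) r\<bar> + \<bar>I y r\<bar>" by simp
    also have "\<dots> \<le> 2 * B * sqrt r" using I_bound[OF r', of "y + s"] I_bound[OF r', of y] by linarith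
    finally have "s * \<bar>avg s (y + r) - avg s y\<bar> \<le> 2 * B * sqrt r" using s by (simp add: abs_mult)
    then show ?thesis using s by (simp add: field_simps)
  qed
qed

end


lemma pw2: fixes \<epsilon> a :: real assumes "0 < \<epsilon>"
  shows "(\<epsilon> / 2^j) powr a = \<epsilon> powr a * (2 powr (-a))^j"
proof -
  have "(\<epsilon> / 2^j) powr a = \<epsilon> powr a / (2^j) powr a"
    using assms by (simp add: powr_divide)
  also have "((2::real)^j) powr a = 2 powr (real j * a)"
    by (simp add: powr_realpow[symmetric] powr_powr)
  also have "(2 powr (-a))^j = 2 powr (- a * real j)"
    by (simp add: powr_realpow[symmetric] powr_powr powr_power)
  ultimately show ?thesis by (simp add: powr_minus_divide mult.commute)
qed

lemma geo_le: fixes q :: real assumes "0 \<le> q" "q < 1" shows "(\<Sum>j<J. q^j) \<le> 1 / (1 - q)"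
proof -
  have "(\<Sum>j<J. q^j) \<le> (\<Sum>j. q^j)"
    using assms by (intro sum_le_suminf summable_geometric) auto
  also have "\<dots> = 1 / (1 - q)" using assms by (simp add: suminf_geometric)
  finally show ?thesis .
qed

lemma CS_weighted:
  fixes d w :: "nat \<Rightarrow> real" assumes "\<And>j. 0 < w j"
  shows "(\<Sum>j<J. d j)^2 \<le> (\<Sum>j<J. w j) * (\<Sum>j<J. (d j)^2 / w j)"
proof -
  have "(\<Sum>j<J. (d j / sqrt (w j)) * sqrt (w j))^2 \<le> (\<Sum>j<J. (d j / sqrt (w j))^2) * (\<Sum>j<J. (sqrt (w j))^2)"
    by (rule Cauchy_Schwarz_ineq_sum)
  moreover have "(\<Sum>j<J. (d j / sqrt (w j)) * sqrt (w j)) = (\<Sum>j<J. d j)"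
    using assms by (intro sum.cong) (auto simp: less_le)
  moreover have "(\<Sum>j<J. (d j / sqrt (w j))^2) = (\<Sum>j<J. (d j)^2 / w j)"
    using assms by (intro sum.cong) (auto simp: power_divide less_le)
  moreover have "(\<Sum>j<J. (sqrt (w j))^2) = (\<Sum>j<J. w j)"
    using assms by (intro sum.cong) (auto simp: less_le)
  ultimately show ?thesis by (simp add: mult.commute)
qed

context hyp begin

definition "\<gamma> = \<alpha> - 1/2"
definition "q = 2 powr (-\<gamma>/2)"
definition "W = 1 / (1 - q)"
definition "K1 = 4 * sqrt 2 * B * C"

lemma gamma0: "0 < \<gamma>" unfolding \<gamma>_def using alpha by simp
lemma q01: "0 < q" "q < 1" unfolding q_def using gamma0 by (auto intro: powr_less_one)
lemma q2: "q^2 = 2 powr (-\<gamma>)"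
  unfolding q_def by (simp add: powr_realpow[symmetric] powr_powr powr_power)
lemma W0: "0 < W" unfolding W_def using q01 by simp
lemma K10: "0 \<le> K1" unfolding K1_def using B1 C0 by simp

lemma dj_sup:
  assumes s: "0 < s" "s \<le> 1"
  shows "\<bar>avg s y - avg (s/2) y\<bar> \<le> 2 * sqrt 2 * B / sqrt s"
proof -
  have s2: "0 < s/2" "s/2 \<le> 1" using s by auto
  define X where "X = B / sqrt s"
  have X0: "0 \<le> X" unfolding X_def using B1 s by simp
  have "B / sqrt (s/2) = sqrt 2 * X" unfolding X_def by (simp add: real_sqrt_divide)
  then have "\<bar>avg s y - avg (s/2) y\<bar> \<le> X + sqrt 2 * X"
    using AV1(3)[OF s, of y] AV1(3)[OF s2, of y] unfolding X_def by linarith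
  moreover have "1 * X \<le> sqrt 2 * X" using X0 by (intro mult_right_mono) auto
  moreover have "2 * sqrt 2 * B / sqrt s = sqrt 2 * X + sqrt 2 * X" unfolding X_def by simp
  ultimately show ?thesis by linarith
qed

lemma dj_L1:
  assumes s: "0 < s" "s \<le> 1"
  shows "(\<integral>\<^sup>+y. ennreal \<bar>avg s y - avg (s/2) y\<bar> \<partial>P) \<le> ennreal (2 * C * s powr \<alpha>)"
proof -
  have s2: "0 < s/2" "s/2 \<le> 1" using s by auto
  have "(\<integral>\<^sup>+y. ennreal \<bar>avg s y - avg (s/2) y\<bar> \<partial>P)
      \<le> (\<integral>\<^sup>+y. ennreal \<bar>avg s y - h y\<bar> + ennreal \<bar>avg (s/2) y - h y\<bar> \<partial>P)"
    by (intro nn_integral_mono) (simp add: ennreal_plus[symmetric] del: ennreal_plus)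
  also have "\<dots> = (\<integral>\<^sup>+y. ennreal \<bar>avg s y - h y\<bar> \<partial>P) + (\<integral>\<^sup>+y. ennreal \<bar>avg (s/2) y - h y\<bar> \<partial>P)"
    by (rule nn_integral_add) auto
  also have "\<dots> \<le> ennreal (C * s powr \<alpha>) + ennreal (C * (s/2) powr \<alpha>)"
    by (intro add_mono AV2 s s2)
  also have "\<dots> \<le> ennreal (C * s powr \<alpha>) + ennreal (C * s powr \<alpha>)"
  proof -
    have "(s/2) powr \<alpha> \<le> s powr \<alpha>" using s alpha by (intro powr_mono2) auto
    then have "C * (s/2) powr \<alpha> \<le> C * s powr \<alpha>" using C0 by (rule mult_left_mono)
    then show ?thesis by (intro add_mono ennreal_leI) auto
  qed
  also have "\<dots> = ennreal (2 * C * s powr \<alpha>)"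
    using C0 by (simp add: ennreal_plus[symmetric] del: ennreal_plus)
  finally show ?thesis .
qed

lemma dj_L2:
  assumes s: "0 < s" "s \<le> 1"
  shows "integrable P (\<lambda>y. (avg s y - avg (s/2) y)^2)"
    "(\<integral>y. (avg s y - avg (s/2) y)^2 \<partial>P) \<le> K1 * s powr \<gamma>"
proof -
  define M where "M = 2 * sqrt 2 * B / sqrt s"
  have M0: "0 \<le> M" unfolding M_def using B1 s by simp
  have pt: "(avg s y - avg (s/2) y)^2 \<le> M * \<bar>avg s y - avg (s/2) y\<bar>" for y
  proof -
    have "(avg s y - avg (s/2) y)^2 = \<bar>avg s y - avg (s/2) y\<bar> * \<bar>avg s y - avg (s/2) y\<bar>"
      by (simp add: power2_eq_square abs_mult_self_eq)
    also have "\<dots> \<le> M * \<bar>avg s y - avg (s/2) y\<bar>"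
      unfolding M_def by (intro mult_right_mono dj_sup s) auto
    finally show ?thesis .
  qed
  have "(\<integral>\<^sup>+y. ennreal ((avg s y - avg (s/2) y)^2) \<partial>P) \<le> (\<integral>\<^sup>+y. ennreal M * ennreal \<bar>avg s y - avg (s/2) y\<bar> \<partial>P)"
    by (intro nn_integral_mono) (simp add: ennreal_mult[symmetric] M0 pt del: ennreal_mult' ennreal_mult'')
  also have "\<dots> = ennreal M * (\<integral>\<^sup>+y. ennreal \<bar>avg s y - avg (s/2) y\<bar> \<partial>P)"
    by (rule nn_integral_cmult) auto
  also have "\<dots> \<le> ennreal M * ennreal (2 * C * s powr \<alpha>)"
    by (intro mult_left_mono dj_L1 s) auto
  also have "\<dots> = ennreal (K1 * s powr \<gamma>)"
  proof -
    have "s powr \<alpha> / sqrt s = s powr \<gamma>"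
      using s unfolding \<gamma>_def by (simp add: powr_diff powr_half_sqrt[symmetric])
    then have e: "s powr \<alpha> = s powr \<gamma> * sqrt s" using s by (simp add: field_simps)
    have "M * (2 * C * s powr \<alpha>) = K1 * s powr \<gamma>"
      unfolding M_def K1_def e using s by (simp add: field_simps)
    then show ?thesis using M0 C0 by (simp add: ennreal_mult[symmetric])
  qed
  finally have *: "(\<integral>\<^sup>+y. ennreal ((avg s y - avg (s/2) y)^2) \<partial>P) \<le> ennreal (K1 * s powr \<gamma>)" .
  show "integrable P (\<lambda>y. (avg s y - avg (s/2) y)^2)"
    by (rule GC(1)[OF _ _ *]) (use K10 in auto)
  show "(\<integral>y. (avg s y - avg (s/2) y)^2 \<partial>P) \<le> K1 * s powr \<gamma>"
    by (rule GC(2)[OF _ _ *]) (use K10 in auto)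
qed


lemma KL_partial:
  assumes e: "0 < \<epsilon>" "\<epsilon> \<le> 1"
  shows "integrable P (\<lambda>y. (avg \<epsilon> y - avg (\<epsilon>/2^J) y)^2)"
    "(\<integral>y. (avg \<epsilon> y - avg (\<epsilon>/2^J) y)^2 \<partial>P) \<le> K1 * W^2 * \<epsilon> powr \<gamma>"
proof -
  define sj where "sj j = \<epsilon> / 2^j" for j :: nat
  have sj: "0 < sj j" "sj j \<le> 1" for j
    unfolding sj_def using e by (auto simp: divide_le_eq order_trans[OF _ one_le_power])
  have sjS: "sj (Suc j) = sj j / 2" for j unfolding sj_def by simp
  define d where "d j y = avg (sj j) y - avg (sj j / 2) y" for j y
  have tele: "avg \<epsilon> y - avg (\<epsilon>/2^J) y = (\<Sum>j<J. d j y)" for y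
  proof -
    have "(\<Sum>j<J. d j y) = (\<Sum>j<J. avg (sj j) y - avg (sj (Suc j)) y)"
      unfolding d_def sjS by simp
    also have "\<dots> = avg (sj 0) y - avg (sj J) y" by (rule sum_lessThan_telescope')
    finally show ?thesis by (simp add: sj_def)
  qed
  have dint: "integrable P (\<lambda>y. (d j y)^2)" for j unfolding d_def by (rule dj_L2(1)[OF sj])
  have dbd: "(\<integral>y. (d j y)^2 \<partial>P) \<le> K1 * \<epsilon> powr \<gamma> * q^j * q^j" for j
  proof -
    have "(\<integral>y. (d j y)^2 \<partial>P) \<le> K1 * (sj j) powr \<gamma>" unfolding d_def by (rule dj_L2(2)[OF sj])
    also have "(sj j) powr \<gamma> = \<epsilon> powr \<gamma> * (q^2)^j" unfolding sj_def q2 by (rule pw2[OF e(1)])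
    also have "(q^2)^j = q^j * q^j" by (simp add: power2_eq_square power_mult_distrib)
    finally show ?thesis by (simp add: mult.assoc)
  qed
  have pt: "(avg \<epsilon> y - avg (\<epsilon>/2^J) y)^2 \<le> W * (\<Sum>j<J. (d j y)^2 / q^j)" for y
  proof -
    have "(avg \<epsilon> y - avg (\<epsilon>/2^J) y)^2 \<le> (\<Sum>j<J. q^j) * (\<Sum>j<J. (d j y)^2 / q^j)"
      unfolding tele by (rule CS_weighted) (use q01 in simp)
    also have "\<dots> \<le> W * (\<Sum>j<J. (d j y)^2 / q^j)"
      unfolding W_def using q01 by (intro mult_right_mono geo_le sum_nonneg) auto
    finally show ?thesis .
  qed
  have bd: "\<bar>avg \<epsilon> y - avg (\<epsilon>/2^J) y\<bar> \<le> B / sqrt \<epsilon> + B / sqrt (sj J)" for y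
    using AV1(3)[OF e, of y] AV1(3)[OF sj, of J y] unfolding sj_def by linarith
  show I: "integrable P (\<lambda>y. (avg \<epsilon> y - avg (\<epsilon>/2^J) y)^2)"
  proof (rule PP.integrable_const_bound[where B="(B / sqrt \<epsilon> + B / sqrt (sj J))^2"])
    show "AE y in P. norm ((avg \<epsilon> y - avg (\<epsilon>/2^J) y)^2) \<le> (B / sqrt \<epsilon> + B / sqrt (sj J))^2"
    proof (rule AE_I2)
      fix y
      have "\<bar>avg \<epsilon> y - avg (\<epsilon>/2^J) y\<bar>^2 \<le> (B / sqrt \<epsilon> + B / sqrt (sj J))^2"
        by (rule power_mono[OF bd]) simp
      then show "norm ((avg \<epsilon> y - avg (\<epsilon>/2^J) y)^2) \<le> (B / sqrt \<epsilon> + B / sqrt (sj J))^2" by simp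
    qed
  qed simp
  have I2: "integrable P (\<lambda>y. W * (\<Sum>j<J. (d j y)^2 / q^j))"
    using dint by (intro integrable_mult_right integrable_sum integrable_divide) auto
  have "(\<integral>y. (avg \<epsilon> y - avg (\<epsilon>/2^J) y)^2 \<partial>P) \<le> (\<integral>y. W * (\<Sum>j<J. (d j y)^2 / q^j) \<partial>P)"
    by (intro integral_mono I I2 pt)
  also have "\<dots> = W * (\<Sum>j<J. (\<integral>y. (d j y)^2 \<partial>P) / q^j)"
    using dint by (simp add: integral_sum integrable_divide)
  also have "\<dots> \<le> W * (\<Sum>j<J. K1 * \<epsilon> powr \<gamma> * q^j)"
  proof -
    have "(\<integral>y. (d j y)^2 \<partial>P) / q^j \<le> K1 * \<epsilon> powr \<gamma> * q^j" for j
      using dbd[of j] q01 by (simp add: divide_le_eq mult.assoc)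
    then show ?thesis using W0 by (intro mult_left_mono sum_mono) auto
  qed
  also have "\<dots> = W * (K1 * \<epsilon> powr \<gamma>) * (\<Sum>j<J. q^j)"
    by (simp add: sum_distrib_left mult.assoc)
  also have "\<dots> \<le> W * (K1 * \<epsilon> powr \<gamma>) * W"
    unfolding W_def using q01 W0 K10 W_def by (intro mult_left_mono geo_le) auto
  finally show "(\<integral>y. (avg \<epsilon> y - avg (\<epsilon>/2^J) y)^2 \<partial>P) \<le> K1 * W^2 * \<epsilon> powr \<gamma>"
    by (simp add: power2_eq_square mult_ac)
qed


lemma avg_conv:
  assumes e: "0 < \<epsilon>" "\<epsilon> \<le> 1"
  shows "AE y in P. (\<lambda>J. avg (\<epsilon>/2^J) y) \<longlonglongrightarrow> h y"
proof -
  have sj: "0 < \<epsilon>/2^J" "\<epsilon>/2^J \<le> 1" for J :: nat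
    using e by (auto simp: divide_le_eq order_trans[OF _ one_le_power])
  have r: "0 \<le> 2 powr (-\<alpha>)" "2 powr (-\<alpha>) < (1::real)" using alpha by (auto intro: powr_less_one)
  have "AE y in P. (\<lambda>J. \<bar>avg (\<epsilon>/2^J) y - h y\<bar>) \<longlonglongrightarrow> 0"
  proof (rule AE_tendsto_summable[where c="\<lambda>J. C * \<epsilon> powr \<alpha> * (2 powr (-\<alpha>))^J"])
    fix J :: nat
    show "(\<integral>\<^sup>+y. ennreal \<bar>avg (\<epsilon>/2^J) y - h y\<bar> \<partial>P) \<le> ennreal (C * \<epsilon> powr \<alpha> * (2 powr (-\<alpha>))^J)"
      using AV2[OF sj, of J] pw2[OF e(1), of J \<alpha>] by (simp add: mult.assoc)
    show "0 \<le> C * \<epsilon> powr \<alpha> * (2 powr (-\<alpha>))^J" using C0 by simp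
  next
    show "summable (\<lambda>J. C * \<epsilon> powr \<alpha> * (2 powr (-\<alpha>))^J)"
      using r by (intro summable_mult summable_geometric) auto
  qed auto
  then show ?thesis
  proof (rule eventually_mono)
    fix y assume "(\<lambda>J. \<bar>avg (\<epsilon>/2^J) y - h y\<bar>) \<longlonglongrightarrow> 0"
    then have "(\<lambda>J. avg (\<epsilon>/2^J) y - h y) \<longlonglongrightarrow> 0" by (simp add: tendsto_rabs_zero_iff)
    then show "(\<lambda>J. avg (\<epsilon>/2^J) y) \<longlonglongrightarrow> h y" by (simp add: LIM_zero_iff)
  qed
qed

lemma KL:
  assumes e: "0 < \<epsilon>" "\<epsilon> \<le> 1"
  shows "integrable P (\<lambda>y. (h y - avg \<epsilon> y)^2)"
    "(\<integral>y. (h y - avg \<epsilon> y)^2 \<partial>P) \<le> K1 * W^2 * \<epsilon> powr \<gamma>"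
proof -
  define u where "u J y = ennreal ((avg \<epsilon> y - avg (\<epsilon>/2^J) y)^2)" for J y
  have um[measurable]: "u J \<in> borel_measurable borel" for J unfolding u_def[abs_def] by measurable
  have ae: "AE y in P. liminf (\<lambda>J. u J y) = ennreal ((h y - avg \<epsilon> y)^2)"
    using avg_conv[OF e]
  proof (rule eventually_mono)
    fix y assume "(\<lambda>J. avg (\<epsilon>/2^J) y) \<longlonglongrightarrow> h y"
    then have "(\<lambda>J. u J y) \<longlonglongrightarrow> ennreal ((avg \<epsilon> y - h y)^2)"
      unfolding u_def by (intro tendsto_ennrealI tendsto_intros) auto
    then have "liminf (\<lambda>J. u J y) = ennreal ((avg \<epsilon> y - h y)^2)"
      by (intro lim_imp_Liminf) auto
    then show "liminf (\<lambda>J. u J y) = ennreal ((h y - avg \<epsilon> y)^2)"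
      by (simp add: power2_commute)
  qed
  have "(\<integral>\<^sup>+y. ennreal ((h y - avg \<epsilon> y)^2) \<partial>P) = (\<integral>\<^sup>+y. liminf (\<lambda>J. u J y) \<partial>P)"
    using ae by (intro nn_integral_cong_AE) (auto elim: eventually_mono)
  also have "\<dots> \<le> liminf (\<lambda>J. \<integral>\<^sup>+y. u J y \<partial>P)"
    by (rule nn_integral_liminf) simp
  also have "\<dots> \<le> limsup (\<lambda>J. \<integral>\<^sup>+y. u J y \<partial>P)"
    by (rule Liminf_le_Limsup) simp
  also have "\<dots> \<le> ennreal (K1 * W^2 * \<epsilon> powr \<gamma>)"
  proof (rule Limsup_bounded[OF always_eventually], rule allI)
    fix J
    have "(\<integral>\<^sup>+y. u J y \<partial>P) = ennreal (\<integral>y. (avg \<epsilon> y - avg (\<epsilon>/2^J) y)^2 \<partial>P)"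
      unfolding u_def by (rule GC2[OF KL_partial(1)[OF e]]) simp
    also have "\<dots> \<le> ennreal (K1 * W^2 * \<epsilon> powr \<gamma>)"
      by (intro ennreal_leI KL_partial(2)[OF e])
    finally show "(\<integral>\<^sup>+y. u J y \<partial>P) \<le> ennreal (K1 * W^2 * \<epsilon> powr \<gamma>)" .
  qed
  finally have *: "(\<integral>\<^sup>+y. ennreal ((h y - avg \<epsilon> y)^2) \<partial>P) \<le> ennreal (K1 * W^2 * \<epsilon> powr \<gamma>)" .
  show "integrable P (\<lambda>y. (h y - avg \<epsilon> y)^2)"
    by (rule GC(1)[OF _ _ *]) (use K10 in auto)
  show "(\<integral>y. (h y - avg \<epsilon> y)^2 \<partial>P) \<le> K1 * W^2 * \<epsilon> powr \<gamma>"
    by (rule GC(2)[OF _ _ *]) (use K10 in auto)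
qed

end


lemma prod_int:
  fixes f g :: "real \<Rightarrow> real"
  assumes [measurable]: "f \<in> borel_measurable borel" "g \<in> borel_measurable borel"
    and "integrable P (\<lambda>x. (f x)^2)" "integrable P (\<lambda>x. (g x)^2)"
  shows "integrable P (\<lambda>x. f x * g x)"
proof (rule Bochner_Integration.integrable_bound)
  show "integrable P (\<lambda>x. ((f x)^2 + (g x)^2) / 2)" using assms(3,4) by auto
  show "AE x in P. norm (f x * g x) \<le> norm (((f x)^2 + (g x)^2) / 2)"
  proof (rule AE_I2)
    fix x
    have "0 \<le> (\<bar>f x\<bar> - \<bar>g x\<bar>)^2" by simp
    then have "2 * (\<bar>f x\<bar> * \<bar>g x\<bar>) \<le> (f x)^2 + (g x)^2"
      by (simp add: power2_eq_square algebra_simps abs_mult_self_eq)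
    then show "norm (f x * g x) \<le> norm (((f x)^2 + (g x)^2) / 2)" by (simp add: abs_mult)
  qed
qed simp

context hyp begin

lemma avg_per: "periodic1 (avg s)"
  unfolding periodic1_def avg_def
proof
  fix y
  have "h (y + 1 + s * t) = h (y + s * t)" for t
    using per unfolding periodic1_def by (metis add.commute add.left_commute)
  then show "(\<integral>t. h (y + 1 + s * t) \<partial>P) = (\<integral>t. h (y + s * t) \<partial>P)" by simp
qed

lemma habs_int: "integrable P (\<lambda>x. \<bar>h x\<bar>)" using hint by simp

definition "L = (\<integral>x. \<bar>h x\<bar> \<partial>P)"

lemma L0: "0 \<le> L" unfolding L_def by simp

lemma shift_abs_int: "integrable P (\<lambda>t. h (c + t))" "(\<integral>t. \<bar>h (c + t)\<bar> \<partial>P) = L"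
proof -
  show "integrable P (\<lambda>t. h (c + t))"
    using shift_integrable[OF hm per, of c] hint by (simp add: add.commute)
  show "(\<integral>t. \<bar>h (c + t)\<bar> \<partial>P) = L"
    using shift_integral[of "\<lambda>x. \<bar>h x\<bar>" c] per unfolding L_def
    by (simp add: add.commute periodic1_def)
qed

lemma T1:
  assumes mean0: "(\<integral>x. h x \<partial>P) = 0"
    and ab: "1 \<le> a" "a < b" and e: "0 < \<epsilon>" "\<epsilon> \<le> 1"
  shows "\<bar>\<integral>\<xi>. avg \<epsilon> (real a * \<xi>) * h (real b * \<xi>) \<partial>P\<bar> \<le> 2 * B * sqrt (real a / real b) / \<epsilon> * L"
proof -
  define \<delta> where "\<delta> = real a / real b"
  have b0: "0 < real b" using ab by simp
  have d: "0 < \<delta>" "\<delta> < 1" unfolding \<delta>_def using ab by auto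
  define u where "u = avg \<epsilon>"
  have um[measurable]: "u \<in> borel_measurable borel" unfolding u_def by simp
  define Mu where "Mu = B / sqrt \<epsilon>"
  have Mu0: "0 \<le> Mu" unfolding Mu_def using B1 e by simp
  have ub: "\<bar>u y\<bar> \<le> Mu" for y unfolding u_def Mu_def by (rule AV1(3)[OF e])
  define F where "F \<xi> = u (real a * \<xi>) * h (real b * \<xi>)" for \<xi>
  have Fm[measurable]: "F \<in> borel_measurable borel" unfolding F_def[abs_def] by measurable
  have Fper: "periodic1 F"
    unfolding F_def using periodic1_scale[OF avg_per[of \<epsilon>], of a] periodic1_scale[OF per, of b]
    unfolding u_def periodic1_def by simp
  have hb_int: "integrable P (\<lambda>\<xi>. h (real b * \<xi>))"
    using scale_integrable[OF hm per, of b] hint ab by simp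
  have Fint: "integrable P F"
  proof (rule Bochner_Integration.integrable_bound)
    show "integrable P (\<lambda>\<xi>. Mu * \<bar>h (real b * \<xi>)\<bar>)" using hb_int by simp
    show "AE x in P. norm (F x) \<le> norm (Mu * \<bar>h (real b * x)\<bar>)"
      by (rule AE_I2) (simp add: F_def abs_mult Mu0 mult_right_mono ub)
  qed simp
  define \<Phi> where "\<Phi> \<xi> t = u (real a * \<xi> + \<delta> * t) * h (real b * \<xi> + t)" for \<xi> t
  have \<Phi>F: "\<Phi> \<xi> t = F (\<xi> + t / real b)" for \<xi> t
    unfolding \<Phi>_def F_def \<delta>_def using b0 by (simp add: algebra_simps)
  have \<Phi>m[measurable]: "(\<lambda>(\<xi>, t). \<Phi> \<xi> t) \<in> borel_measurable (P \<Otimes>\<^sub>M P)"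
    unfolding \<Phi>_def by measurable
  have \<Phi>int: "integrable (P \<Otimes>\<^sub>M P) (\<lambda>(\<xi>, t). \<Phi> \<xi> t)"
  proof (subst integrable_iff_bounded, intro conjI)
    show "(\<lambda>(\<xi>, t). \<Phi> \<xi> t) \<in> borel_measurable (P \<Otimes>\<^sub>M P)" by (rule \<Phi>m)
    have "(\<integral>\<^sup>+z. ennreal (norm ((\<lambda>(\<xi>, t). \<Phi> \<xi> t) z)) \<partial>(P \<Otimes>\<^sub>M P))
        \<le> (\<integral>\<^sup>+z. ennreal (Mu * \<bar>h (real b * fst z + snd z)\<bar>) \<partial>(P \<Otimes>\<^sub>M P))"
      by (intro nn_integral_mono ennreal_leI)
         (auto simp: \<Phi>_def abs_mult Mu0 mult_right_mono ub split: prod.splits)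
    also have "\<dots> = (\<integral>\<^sup>+\<xi>. \<integral>\<^sup>+t. ennreal (Mu * \<bar>h (real b * \<xi> + t)\<bar>) \<partial>P \<partial>P)"
    proof -
      define G where "G z = ennreal (Mu * \<bar>h (real b * fst z + snd z)\<bar>)" for z :: "real \<times> real"
      have Gm: "G \<in> borel_measurable (P \<Otimes>\<^sub>M P)" unfolding G_def by measurable
      have "(\<integral>\<^sup>+\<xi>. \<integral>\<^sup>+t. G (\<xi>, t) \<partial>P \<partial>P) = integral\<^sup>N (P \<Otimes>\<^sub>M P) G"
        by (rule PP.nn_integral_fst[OF Gm])
      then show ?thesis unfolding G_def by simp
    qed
    also have "\<dots> = (\<integral>\<^sup>+\<xi>. ennreal (Mu * L) \<partial>P)"
    proof (intro nn_integral_cong)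
      fix \<xi>
      show "(\<integral>\<^sup>+t. ennreal (Mu * \<bar>h (real b * \<xi> + t)\<bar>) \<partial>P) = ennreal (Mu * L)"
        using shift_abs_int[of "real b * \<xi>"] Mu0
        by (subst GC2) (auto simp: integrable_mult_right)
    qed
    also have "\<dots> < \<infinity>" by (simp add: emeasure_P_UNIV ennreal_mult_less_top)
    finally show "(\<integral>\<^sup>+z. ennreal (norm ((\<lambda>(\<xi>, t). \<Phi> \<xi> t) z)) \<partial>(P \<Otimes>\<^sub>M P)) < \<infinity>" .
  qed
  have "(\<integral>\<xi>. F \<xi> \<partial>P) = (\<integral>t. (\<integral>\<xi>. \<Phi> \<xi> t \<partial>P) \<partial>P)"
  proof -
    have "(\<integral>\<xi>. \<Phi> \<xi> t \<partial>P) = (\<integral>\<xi>. F \<xi> \<partial>P)" for t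
      unfolding \<Phi>F by (rule shift_integral[OF Fm Fper])
    then show ?thesis by (simp add: measure_P_UNIV)
  qed
  also have "\<dots> = (\<integral>\<xi>. (\<integral>t. \<Phi> \<xi> t \<partial>P) \<partial>P)"
    by (rule PP2.Fubini_integral[OF \<Phi>int])
  finally have eq: "(\<integral>\<xi>. F \<xi> \<partial>P) = (\<integral>\<xi>. (\<integral>t. \<Phi> \<xi> t \<partial>P) \<partial>P)" .
  have Gb: "\<bar>\<integral>t. \<Phi> \<xi> t \<partial>P\<bar> \<le> 2 * B * sqrt \<delta> / \<epsilon> * L" for \<xi>
  proof -
    have hI: "integrable P (\<lambda>t. h (real b * \<xi> + t))" by (rule shift_abs_int(1))
    have I1: "integrable P (\<lambda>t. u (real a * \<xi> + \<delta> * t) * h (real b * \<xi> + t))"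
      using \<Phi>int unfolding \<Phi>_def
    proof -
      show ?thesis
      proof (rule Bochner_Integration.integrable_bound)
        show "integrable P (\<lambda>t. Mu * \<bar>h (real b * \<xi> + t)\<bar>)" using hI by simp
        show "AE x in P. norm (u (real a * \<xi> + \<delta> * x) * h (real b * \<xi> + x)) \<le> norm (Mu * \<bar>h (real b * \<xi> + x)\<bar>)"
          by (rule AE_I2) (simp add: abs_mult Mu0 mult_right_mono ub)
      qed simp
    qed
    have I2: "integrable P (\<lambda>t. u (real a * \<xi>) * h (real b * \<xi> + t))" using hI by simp
    have z: "(\<integral>t. h (real b * \<xi> + t) \<partial>P) = 0"
      using shift_integral[OF hm per, of "real b * \<xi>"] mean0 by (simp add: add.commute)
    have "(\<integral>t. \<Phi> \<xi> t \<partial>P) = (\<integral>t. (u (real a * \<xi> + \<delta> * t) - u (real a * \<xi>)) * h (real b * \<xi> + t) \<partial>P)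
         + u (real a * \<xi>) * (\<integral>t. h (real b * \<xi> + t) \<partial>P)"
      unfolding \<Phi>_def using I1 I2 by (simp add: left_diff_distrib)
    also have "\<dots> = (\<integral>t. (u (real a * \<xi> + \<delta> * t) - u (real a * \<xi>)) * h (real b * \<xi> + t) \<partial>P)"
      using z by simp
    finally have e1: "(\<integral>t. \<Phi> \<xi> t \<partial>P) = (\<integral>t. (u (real a * \<xi> + \<delta> * t) - u (real a * \<xi>)) * h (real b * \<xi> + t) \<partial>P)" .
    have I3: "integrable P (\<lambda>t. (u (real a * \<xi> + \<delta> * t) - u (real a * \<xi>)) * h (real b * \<xi> + t))"
      using I1 I2 by (simp add: left_diff_distrib)
    have "\<bar>\<integral>t. (u (real a * \<xi> + \<delta> * t) - u (real a * \<xi>)) * h (real b * \<xi> + t) \<partial>P\<bar>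
        \<le> (\<integral>t. \<bar>(u (real a * \<xi> + \<delta> * t) - u (real a * \<xi>)) * h (real b * \<xi> + t)\<bar> \<partial>P)"
      by (rule integral_abs_bound)
    also have "\<dots> \<le> (\<integral>t. (2 * B * sqrt \<delta> / \<epsilon>) * \<bar>h (real b * \<xi> + t)\<bar> \<partial>P)"
    proof (rule integral_mono_AE)
      show "integrable P (\<lambda>t. \<bar>(u (real a * \<xi> + \<delta> * t) - u (real a * \<xi>)) * h (real b * \<xi> + t)\<bar>)"
        using I3 by simp
      show "integrable P (\<lambda>t. (2 * B * sqrt \<delta> / \<epsilon>) * \<bar>h (real b * \<xi> + t)\<bar>)" using hI by simp
      show "AE t in P. \<bar>(u (real a * \<xi> + \<delta> * t) - u (real a * \<xi>)) * h (real b * \<xi> + t)\<bar>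
          \<le> (2 * B * sqrt \<delta> / \<epsilon>) * \<bar>h (real b * \<xi> + t)\<bar>"
        using AE_P
      proof (rule eventually_mono)
        fix t :: real assume t: "0 \<le> t \<and> t < 1"
        have r: "0 \<le> \<delta> * t" "\<delta> * t \<le> 1" using t d by (auto simp: mult_le_one)
        have "\<bar>u (real a * \<xi> + \<delta> * t) - u (real a * \<xi>)\<bar> \<le> 2 * B * sqrt (\<delta> * t) / \<epsilon>"
          unfolding u_def by (rule AV3[OF r e])
        also have "\<dots> \<le> 2 * B * sqrt \<delta> / \<epsilon>"
          using t d e B1 by (intro divide_right_mono mult_left_mono) (auto simp: mult_left_le)
        finally have X: "\<bar>u (real a * \<xi> + \<delta> * t) - u (real a * \<xi>)\<bar> \<le> 2 * B * sqrt \<delta> / \<epsilon>" .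
        show "\<bar>(u (real a * \<xi> + \<delta> * t) - u (real a * \<xi>)) * h (real b * \<xi> + t)\<bar>
          \<le> (2 * B * sqrt \<delta> / \<epsilon>) * \<bar>h (real b * \<xi> + t)\<bar>"
          unfolding abs_mult by (rule mult_right_mono[OF X]) simp
      qed
    qed
    also have "\<dots> = 2 * B * sqrt \<delta> / \<epsilon> * L" using shift_abs_int(2)[of "real b * \<xi>"] by simp
    finally show ?thesis unfolding e1 .
  qed
  have Gm: "(\<lambda>\<xi>. \<integral>t. \<Phi> \<xi> t \<partial>P) \<in> borel_measurable borel"
    unfolding \<Phi>_def by measurable
  have "\<bar>\<integral>\<xi>. (\<integral>t. \<Phi> \<xi> t \<partial>P) \<partial>P\<bar> \<le> 2 * B * sqrt \<delta> / \<epsilon> * L"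
    by (rule P_bound(2)[OF Gm Gb])
  then show ?thesis unfolding eq[symmetric] F_def u_def \<delta>_def .
qed


definition "\<kappa> = min \<gamma> 1 / 4"
definition "Kc = K1 * W^2 + B * C + 2 * B * L"

lemma kappa0: "0 < \<kappa>" unfolding \<kappa>_def using gamma0 by simp

lemma sq_scale_int:
  fixes g :: "real \<Rightarrow> real"
  assumes [measurable]: "g \<in> borel_measurable borel" and "periodic1 g" "integrable P (\<lambda>x. (g x)^2)" "0 < k"
  shows "integrable P (\<lambda>x. (g (real k * x))^2)"
  using scale_integrable[of "\<lambda>x. (g x)^2" k] assms by (simp add: periodic1_def)

lemma CL:
  assumes mean0: "(\<integral>x. h x \<partial>P) = 0" and ab: "1 \<le> a" "a < b"
  shows "\<bar>\<integral>\<xi>. h (real a * \<xi>) * h (real b * \<xi>) \<partial>P\<bar> \<le> Kc * (real a / real b) powr \<kappa>"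
proof -
  define \<delta> where "\<delta> = real a / real b"
  have d: "0 < \<delta>" "\<delta> < 1" unfolding \<delta>_def using ab by auto
  define \<epsilon> where "\<epsilon> = \<delta> powr (1/4)"
  have e: "0 < \<epsilon>" "\<epsilon> \<le> 1" unfolding \<epsilon>_def using d by (auto intro: powr_le1)
  have a0: "0 < a" "0 < b" using ab by auto
  define u where "u = avg \<epsilon>"
  have um[measurable]: "u \<in> borel_measurable borel" unfolding u_def by simp
  have uper: "periodic1 u" unfolding u_def by (rule avg_per)
  define Mu where "Mu = B / sqrt \<epsilon>"
  have Mu0: "0 \<le> Mu" unfolding Mu_def using B1 e by simp
  have ub: "\<bar>u y\<bar> \<le> Mu" for y unfolding u_def Mu_def by (rule AV1(3)[OF e])
  have usq: "integrable P (\<lambda>x. (u x)^2)"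
  proof (rule PP.integrable_const_bound[where B="Mu^2"])
    show "AE x in P. norm ((u x)^2) \<le> Mu^2"
      by (rule AE_I2) (simp add: abs_le_square_iff[symmetric] ub Mu0)
  qed simp
  define v where "v y = h y - u y" for y
  have vm[measurable]: "v \<in> borel_measurable borel" unfolding v_def[abs_def] by simp
  have vper: "periodic1 v" using per uper unfolding v_def periodic1_def by simp
  have vsq: "integrable P (\<lambda>x. (v x)^2)" unfolding v_def u_def by (rule KL(1)[OF e])
  have vsqb: "(\<integral>x. (v x)^2 \<partial>P) \<le> K1 * W^2 * \<epsilon> powr \<gamma>" unfolding v_def u_def by (rule KL(2)[OF e])
  have vL1: "integrable P (\<lambda>x. \<bar>v x\<bar>)" "(\<integral>x. \<bar>v x\<bar> \<partial>P) \<le> C * \<epsilon> powr \<alpha>"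
  proof -
    have *: "(\<integral>\<^sup>+y. ennreal \<bar>v y\<bar> \<partial>P) \<le> ennreal (C * \<epsilon> powr \<alpha>)"
      using AV2[OF e] unfolding v_def u_def by (simp add: abs_minus_commute)
    show "integrable P (\<lambda>x. \<bar>v x\<bar>)" by (rule GC(1)[OF _ _ *]) (use C0 in auto)
    show "(\<integral>x. \<bar>v x\<bar> \<partial>P) \<le> C * \<epsilon> powr \<alpha>" by (rule GC(2)[OF _ _ *]) (use C0 in auto)
  qed
  have ha: "integrable P (\<lambda>x. (h (real a * x))^2)" by (rule sq_scale_int[OF hm per L2 a0(1)])
  have hb: "integrable P (\<lambda>x. (h (real b * x))^2)" by (rule sq_scale_int[OF hm per L2 a0(2)])
  have ua: "integrable P (\<lambda>x. (u (real a * x))^2)" by (rule sq_scale_int[OF um uper usq a0(1)])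
  have ubb: "integrable P (\<lambda>x. (u (real b * x))^2)" by (rule sq_scale_int[OF um uper usq a0(2)])
  have va: "integrable P (\<lambda>x. (v (real a * x))^2)" by (rule sq_scale_int[OF vm vper vsq a0(1)])
  have vb: "integrable P (\<lambda>x. (v (real b * x))^2)" by (rule sq_scale_int[OF vm vper vsq a0(2)])
  have I1: "integrable P (\<lambda>x. u (real a * x) * h (real b * x))" by (rule prod_int[OF _ _ ua hb]) auto
  have I2: "integrable P (\<lambda>x. v (real a * x) * u (real b * x))" by (rule prod_int[OF _ _ va ubb]) auto
  have I3: "integrable P (\<lambda>x. v (real a * x) * v (real b * x))" by (rule prod_int[OF _ _ va vb]) auto
  have split: "h (real a * x) * h (real b * x) = u (real a * x) * h (real b * x)
      + v (real a * x) * u (real b * x) + v (real a * x) * v (real b * x)" for x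
    unfolding v_def by (simp add: algebra_simps)
  have "(\<integral>\<xi>. h (real a * \<xi>) * h (real b * \<xi>) \<partial>P) = (\<integral>\<xi>. u (real a * \<xi>) * h (real b * \<xi>) \<partial>P)
      + (\<integral>\<xi>. v (real a * \<xi>) * u (real b * \<xi>) \<partial>P) + (\<integral>\<xi>. v (real a * \<xi>) * v (real b * \<xi>) \<partial>P)"
    unfolding split using I1 I2 I3 by simp
  moreover have t1: "\<bar>\<integral>\<xi>. u (real a * \<xi>) * h (real b * \<xi>) \<partial>P\<bar> \<le> 2 * B * sqrt \<delta> / \<epsilon> * L"
    unfolding u_def \<delta>_def by (rule T1[OF mean0 ab e])
  moreover have t2: "\<bar>\<integral>\<xi>. v (real a * \<xi>) * u (real b * \<xi>) \<partial>P\<bar> \<le> Mu * (C * \<epsilon> powr \<alpha>)"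
  proof -
    have "\<bar>\<integral>\<xi>. v (real a * \<xi>) * u (real b * \<xi>) \<partial>P\<bar> \<le> (\<integral>\<xi>. \<bar>v (real a * \<xi>) * u (real b * \<xi>)\<bar> \<partial>P)"
      by (rule integral_abs_bound)
    also have "\<dots> \<le> (\<integral>\<xi>. Mu * \<bar>v (real a * \<xi>)\<bar> \<partial>P)"
    proof (rule integral_mono)
      show "integrable P (\<lambda>\<xi>. Mu * \<bar>v (real a * \<xi>)\<bar>)"
        using scale_integrable[of "\<lambda>x. \<bar>v x\<bar>" a] vL1(1) vper a0 by (simp add: periodic1_def)
      fix \<xi>
      show "\<bar>v (real a * \<xi>) * u (real b * \<xi>)\<bar> \<le> Mu * \<bar>v (real a * \<xi>)\<bar>"
        unfolding abs_mult by (subst mult.commute) (rule mult_right_mono[OF ub], simp)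
    qed (use I2 in simp)
    also have "\<dots> = Mu * (\<integral>\<xi>. \<bar>v (real a * \<xi>)\<bar> \<partial>P)" by simp
    also have "(\<integral>\<xi>. \<bar>v (real a * \<xi>)\<bar> \<partial>P) = (\<integral>x. \<bar>v x\<bar> \<partial>P)"
      using scale_integral[of "\<lambda>x. \<bar>v x\<bar>" a] vper a0 by (simp add: periodic1_def)
    also have "Mu * \<dots> \<le> Mu * (C * \<epsilon> powr \<alpha>)" by (rule mult_left_mono[OF vL1(2) Mu0])
    finally show ?thesis .
  qed
  moreover have t3: "\<bar>\<integral>\<xi>. v (real a * \<xi>) * v (real b * \<xi>) \<partial>P\<bar> \<le> K1 * W^2 * \<epsilon> powr \<gamma>"
  proof -
    have "\<bar>\<integral>\<xi>. v (real a * \<xi>) * v (real b * \<xi>) \<partial>P\<bar> \<le> (\<integral>\<xi>. \<bar>v (real a * \<xi>) * v (real b * \<xi>)\<bar> \<partial>P)"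
      by (rule integral_abs_bound)
    also have "\<dots> \<le> (\<integral>\<xi>. ((v (real a * \<xi>))^2 + (v (real b * \<xi>))^2) / 2 \<partial>P)"
    proof (rule integral_mono)
      fix x
      have "0 \<le> (\<bar>v (real a * x)\<bar> - \<bar>v (real b * x)\<bar>)^2" by simp
      then show "\<bar>v (real a * x) * v (real b * x)\<bar> \<le> ((v (real a * x))^2 + (v (real b * x))^2) / 2"
        by (simp add: power2_eq_square algebra_simps abs_mult_self_eq abs_mult)
    qed (use I3 va vb in auto)
    also have "\<dots> = ((\<integral>\<xi>. (v (real a * \<xi>))^2 \<partial>P) + (\<integral>\<xi>. (v (real b * \<xi>))^2 \<partial>P)) / 2"
      using va vb by simp
    also have "(\<integral>\<xi>. (v (real a * \<xi>))^2 \<partial>P) = (\<integral>x. (v x)^2 \<partial>P)"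
      using scale_integral[of "\<lambda>x. (v x)^2" a] vper a0 by (simp add: periodic1_def)
    also have "(\<integral>\<xi>. (v (real b * \<xi>))^2 \<partial>P) = (\<integral>x. (v x)^2 \<partial>P)"
      using scale_integral[of "\<lambda>x. (v x)^2" b] vper a0 by (simp add: periodic1_def)
    finally show ?thesis using vsqb by simp
  qed
  ultimately have tot: "\<bar>\<integral>\<xi>. h (real a * \<xi>) * h (real b * \<xi>) \<partial>P\<bar>
      \<le> 2 * B * sqrt \<delta> / \<epsilon> * L + Mu * (C * \<epsilon> powr \<alpha>) + K1 * W^2 * \<epsilon> powr \<gamma>"
    by linarith
  have r1: "sqrt \<delta> / \<epsilon> = \<delta> powr (1/4)"
    unfolding \<epsilon>_def using d by (simp add: powr_half_sqrt[symmetric] powr_diff[symmetric])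
  have r2: "Mu * (C * \<epsilon> powr \<alpha>) = B * C * \<epsilon> powr \<gamma>"
  proof -
    have "\<epsilon> powr \<alpha> / sqrt \<epsilon> = \<epsilon> powr \<gamma>"
      using e unfolding \<gamma>_def by (simp add: powr_diff powr_half_sqrt[symmetric])
    then have ee: "\<epsilon> powr \<alpha> = \<epsilon> powr \<gamma> * sqrt \<epsilon>" using e by (simp add: field_simps)
    show ?thesis unfolding Mu_def ee using e by (simp add: field_simps)
  qed
  have r3: "\<epsilon> powr \<gamma> = \<delta> powr (\<gamma> / 4)" unfolding \<epsilon>_def using d by (simp add: powr_powr)
  have p1: "\<delta> powr (1/4) \<le> \<delta> powr \<kappa>" using d unfolding \<kappa>_def by (intro powr_mono') auto
  have p2: "\<delta> powr (\<gamma>/4) \<le> \<delta> powr \<kappa>" using d unfolding \<kappa>_def by (intro powr_mono') auto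
  have "2 * B * sqrt \<delta> / \<epsilon> * L + Mu * (C * \<epsilon> powr \<alpha>) + K1 * W^2 * \<epsilon> powr \<gamma>
      = 2 * B * L * \<delta> powr (1/4) + (B * C + K1 * W^2) * \<delta> powr (\<gamma>/4)"
  proof -
    have "2 * B * sqrt \<delta> / \<epsilon> * L = 2 * B * L * (sqrt \<delta> / \<epsilon>)" by simp
    then show ?thesis unfolding r2 r3 r1 by (simp add: algebra_simps)
  qed
  also have "\<dots> \<le> 2 * B * L * \<delta> powr \<kappa> + (B * C + K1 * W^2) * \<delta> powr \<kappa>"
    using B1 L0 C0 K10 by (intro add_mono mult_left_mono p1 p2) auto
  also have "\<dots> = Kc * \<delta> powr \<kappa>" unfolding Kc_def by (simp add: algebra_simps)
  finally show ?thesis using tot unfolding \<delta>_def by linarith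
qed

end


definition an :: "nat \<Rightarrow> nat" where "an n = 2^n - 1"

lemma an_ge1: "1 \<le> n \<Longrightarrow> 1 \<le> an n"
  unfolding an_def using power_increasing[of 1 n "2::nat"] by simp

lemma real_an: "real (an n) = 2^n - 1"
  unfolding an_def by (simp add: of_nat_diff)

lemma an_mono: "m < n \<Longrightarrow> an m < an n"
  unfolding an_def by (simp add: diff_less_mono power_strict_increasing)

lemma an_ratio: assumes "1 \<le> m" "m \<le> n" shows "real (an m) / real (an n) \<le> (1/2)^(n - m)"
proof -
  have n1: "(2::real)^n > 1" using assms by (simp add: one_less_power)
  have "(2::real)^n = 2^m * 2^(n-m)" using assms by (simp add: power_add[symmetric])
  then have "(2^m - 1) * 2^(n-m) \<le> (2::real)^n - 1"
    by (simp add: algebra_simps)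
  then have "(2^m - 1) / (2^n - 1) \<le> 1 / (2::real)^(n-m)"
    using n1 by (simp add: field_simps)
  then show ?thesis unfolding real_an by (simp add: power_one_over)
qed

lemma dist_sum:
  fixes r :: real assumes r: "0 \<le> r" "r < 1"
  shows "(\<Sum>n\<in>{1..N}. r ^ (if m \<le> n then n - m else m - n)) \<le> 2 / (1 - r)"
proof -
  have geo: "(\<Sum>k\<in>K. r^k) \<le> 1 / (1 - r)" if "finite K" for K
  proof -
    have "(\<Sum>k\<in>K. r^k) \<le> (\<Sum>k. r^k)"
      using r that by (intro sum_le_suminf summable_geometric) auto
    also have "\<dots> = 1 / (1 - r)" using r by (simp add: suminf_geometric)
    finally show ?thesis .
  qed
  let ?A = "{1..N} \<inter> {n. m \<le> n}" and ?B = "{1..N} \<inter> - {n. m \<le> n}"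
  have "(\<Sum>n\<in>{1..N}. r ^ (if m \<le> n then n - m else m - n))
      = (\<Sum>n\<in>{1..N}. if m \<le> n then r ^ (n - m) else r ^ (m - n))"
    by (intro sum.cong) auto
  also have "\<dots> = (\<Sum>n\<in>?A. r ^ (n - m)) + (\<Sum>n\<in>?B. r ^ (m - n))"
    by (rule sum.If_cases) simp
  also have "(\<Sum>n\<in>?A. r ^ (n - m)) = (\<Sum>k\<in>(\<lambda>n. n - m) ` ?A. r ^ k)"
    by (subst sum.reindex) (auto simp: inj_on_def)
  also have "(\<Sum>n\<in>?B. r ^ (m - n)) = (\<Sum>k\<in>(\<lambda>n. m - n) ` ?B. r ^ k)"
    by (subst sum.reindex) (auto simp: inj_on_def)
  finally show ?thesis using geo[of "(\<lambda>n. n - m) ` ?A"] geo[of "(\<lambda>n. m - n) ` ?B"] by simp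
qed

context hyp begin

definition "r = 2 powr (-\<kappa>)"
definition "Km = max H Kc"
definition "KV = Km * 2 / (1 - r)"

lemma r01: "0 < r" "r < 1" unfolding r_def using kappa0 by (auto intro: powr_less_one)
lemma Km0: "0 \<le> Km" unfolding Km_def using H0 by simp
lemma KV0: "0 \<le> KV" unfolding KV_def using Km0 r01 by simp

lemma corr_bound:
  assumes mean0: "(\<integral>x. h x \<partial>P) = 0" and mn: "1 \<le> m" "1 \<le> n"
  shows "\<bar>\<integral>\<xi>. h (real (an m) * \<xi>) * h (real (an n) * \<xi>) \<partial>P\<bar> \<le> Km * r ^ (if m \<le> n then n - m else m - n)"
proof -
  have gen: "\<bar>\<integral>\<xi>. h (real (an m) * \<xi>) * h (real (an n) * \<xi>) \<partial>P\<bar> \<le> Km * r ^ (n - m)"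
    if mn: "1 \<le> m" "m < n" for m n
  proof -
    have "\<bar>\<integral>\<xi>. h (real (an m) * \<xi>) * h (real (an n) * \<xi>) \<partial>P\<bar> \<le> Kc * (real (an m) / real (an n)) powr \<kappa>"
      by (rule CL[OF mean0 an_ge1[OF mn(1)] an_mono[OF mn(2)]])
    also have "(real (an m) / real (an n)) powr \<kappa> \<le> ((1/2)^(n - m)) powr \<kappa>"
      using an_ratio[of m n] mn an_ge1[of m] kappa0 by (intro powr_mono2) auto
    also have "((1/2::real)^(n - m)) powr \<kappa> = r ^ (n - m)"
      unfolding r_def by (simp add: powr_realpow[symmetric] powr_powr powr_power powr_minus_divide
          powr_divide mult.commute)
    finally have "\<bar>\<integral>\<xi>. h (real (an m) * \<xi>) * h (real (an n) * \<xi>) \<partial>P\<bar> \<le> Kc * r ^ (n - m)"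
      using Kc_def K10 B1 C0 L0 by (simp add: mult_left_mono)
    also have "\<dots> \<le> Km * r ^ (n - m)" unfolding Km_def using r01 by (intro mult_right_mono) auto
    finally show ?thesis .
  qed
  consider "m = n" | "m < n" | "n < m" by linarith
  then show ?thesis
  proof cases
    case 1
    have a0: "0 < an n" using an_ge1[OF mn(2)] by simp
    have "(\<integral>\<xi>. h (real (an n) * \<xi>) * h (real (an n) * \<xi>) \<partial>P) = (\<integral>x. (h x)^2 \<partial>P)"
      using scale_integral[of "\<lambda>x. (h x)^2" "an n"] per a0 by (simp add: periodic1_def power2_eq_square)
    then show ?thesis using 1 H0 unfolding H_def[symmetric] Km_def by simp
  next
    case 2 then show ?thesis using gen[of m n] mn by simp
  next
    case 3 then show ?thesis using gen[of n m] mn by (simp add: mult.commute)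
  qed
qed


lemma V:
  assumes mean0: "(\<integral>x. h x \<partial>P) = 0"
  shows "integrable P (\<lambda>\<xi>. (\<Sum>n\<in>{1..N}. h (real (an n) * \<xi>))^2)"
    "(\<integral>\<xi>. (\<Sum>n\<in>{1..N}. h (real (an n) * \<xi>))^2 \<partial>P) \<le> KV * real N"
proof -
  define f where "f n \<xi> = h (real (an n) * \<xi>)" for n \<xi>
  have fm[measurable]: "f n \<in> borel_measurable borel" for n unfolding f_def[abs_def] by simp
  have fsq: "integrable P (\<lambda>\<xi>. (f n \<xi>)^2)" if "n \<in> {1..N}" for n
    unfolding f_def using an_ge1[of n] that by (intro sq_scale_int[OF hm per L2]) auto
  have fprod: "integrable P (\<lambda>\<xi>. f m \<xi> * f n \<xi>)" if "m \<in> {1..N}" "n \<in> {1..N}" for m n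
    by (rule prod_int[OF fm fm fsq[OF that(1)] fsq[OF that(2)]])
  have sq: "(\<Sum>n\<in>{1..N}. f n \<xi>)^2 = (\<Sum>m\<in>{1..N}. \<Sum>n\<in>{1..N}. f m \<xi> * f n \<xi>)" for \<xi>
    by (simp add: power2_eq_square sum_product)
  have Iall: "integrable P (\<lambda>\<xi>. \<Sum>m\<in>{1..N}. \<Sum>n\<in>{1..N}. f m \<xi> * f n \<xi>)"
  proof (rule Bochner_Integration.integrable_sum)
    fix m assume m: "m \<in> {1..N}"
    show "integrable P (\<lambda>\<xi>. \<Sum>n\<in>{1..N}. f m \<xi> * f n \<xi>)"
    proof (rule Bochner_Integration.integrable_sum)
      fix n assume n: "n \<in> {1..N}"
      show "integrable P (\<lambda>\<xi>. f m \<xi> * f n \<xi>)" by (rule fprod[OF m n])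
    qed
  qed
  have e: "(\<lambda>\<xi>. (\<Sum>n\<in>{1..N}. h (real (an n) * \<xi>))^2) = (\<lambda>\<xi>. \<Sum>m\<in>{1..N}. \<Sum>n\<in>{1..N}. f m \<xi> * f n \<xi>)"
    by (rule ext) (use sq in \<open>simp add: f_def\<close>)
  show "integrable P (\<lambda>\<xi>. (\<Sum>n\<in>{1..N}. h (real (an n) * \<xi>))^2)"
    unfolding e by (rule Iall)
  have "(\<integral>\<xi>. (\<Sum>n\<in>{1..N}. f n \<xi>)^2 \<partial>P) = (\<Sum>m\<in>{1..N}. \<Sum>n\<in>{1..N}. \<integral>\<xi>. f m \<xi> * f n \<xi> \<partial>P)"
  proof -
    have inner: "integrable P (\<lambda>\<xi>. \<Sum>n\<in>{1..N}. f m \<xi> * f n \<xi>)" if m: "m \<in> {1..N}" for m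
      by (rule Bochner_Integration.integrable_sum) (rule fprod[OF m])
    have "(\<integral>\<xi>. (\<Sum>m\<in>{1..N}. \<Sum>n\<in>{1..N}. f m \<xi> * f n \<xi>) \<partial>P)
        = (\<Sum>m\<in>{1..N}. \<integral>\<xi>. (\<Sum>n\<in>{1..N}. f m \<xi> * f n \<xi>) \<partial>P)"
      by (rule Bochner_Integration.integral_sum) (rule inner)
    also have "\<dots> = (\<Sum>m\<in>{1..N}. \<Sum>n\<in>{1..N}. \<integral>\<xi>. f m \<xi> * f n \<xi> \<partial>P)"
    proof (rule sum.cong[OF refl])
      fix m assume m: "m \<in> {1..N}"
      show "(\<integral>\<xi>. (\<Sum>n\<in>{1..N}. f m \<xi> * f n \<xi>) \<partial>P) = (\<Sum>n\<in>{1..N}. \<integral>\<xi>. f m \<xi> * f n \<xi> \<partial>P)"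
        by (rule Bochner_Integration.integral_sum) (rule fprod[OF m])
    qed
    finally show ?thesis by (simp only: sq)
  qed
  also have "\<dots> \<le> (\<Sum>m\<in>{1..N}. \<Sum>n\<in>{1..N}. Km * r ^ (if m \<le> n then n - m else m - n))"
  proof (intro sum_mono)
    fix m n assume "m \<in> {1..N}" "n \<in> {1..N}"
    then have "\<bar>\<integral>\<xi>. f m \<xi> * f n \<xi> \<partial>P\<bar> \<le> Km * r ^ (if m \<le> n then n - m else m - n)"
      unfolding f_def by (intro corr_bound[OF mean0]) auto
    then show "(\<integral>\<xi>. f m \<xi> * f n \<xi> \<partial>P) \<le> Km * r ^ (if m \<le> n then n - m else m - n)" by simp
  qed
  also have "\<dots> \<le> (\<Sum>m\<in>{1..N}. Km * (2 / (1 - r)))"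
  proof (intro sum_mono)
    fix m
    have "(\<Sum>n\<in>{1..N}. Km * r ^ (if m \<le> n then n - m else m - n))
        = Km * (\<Sum>n\<in>{1..N}. r ^ (if m \<le> n then n - m else m - n))"
      by (simp add: sum_distrib_left)
    also have "\<dots> \<le> Km * (2 / (1 - r))"
      using r01 Km0 by (intro mult_left_mono dist_sum) auto
    finally show "(\<Sum>n\<in>{1..N}. Km * r ^ (if m \<le> n then n - m else m - n)) \<le> Km * (2 / (1 - r))" .
  qed
  also have "\<dots> = KV * real N" unfolding KV_def by simp
  finally show "(\<integral>\<xi>. (\<Sum>n\<in>{1..N}. h (real (an n) * \<xi>))^2 \<partial>P) \<le> KV * real N"
    unfolding f_def .
qed

lemma floor_half: fixes x :: real assumes "1 \<le> x" shows "x / 2 \<le> real (nat \<lfloor>x\<rfloor>)"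
proof -
  have "x - 1 < real_of_int \<lfloor>x\<rfloor>" by linarith
  moreover have "1 \<le> real_of_int \<lfloor>x\<rfloor>" using assms by (simp add: le_floor_iff)
  moreover have "real (nat \<lfloor>x\<rfloor>) = real_of_int \<lfloor>x\<rfloor>" using assms by simp
  ultimately show ?thesis by linarith
qed

lemma sq_tendsto_zero: fixes x :: "nat \<Rightarrow> real"
  assumes "(\<lambda>j. (x j)^2) \<longlonglongrightarrow> 0" shows "x \<longlonglongrightarrow> 0"
proof -
  have "(\<lambda>j. sqrt ((x j)^2)) \<longlonglongrightarrow> sqrt 0" by (intro tendsto_real_sqrt assms)
  then have "(\<lambda>j. \<bar>x j\<bar>) \<longlonglongrightarrow> 0" by simp
  then show ?thesis by (simp add: tendsto_rabs_zero_iff)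
qed

lemma MR_mean0:
  fixes \<rho> :: real
  assumes mean0: "(\<integral>x. h x \<partial>P) = 0" and \<rho>: "1 < \<rho>"
  shows "AE \<xi> in P. (\<lambda>j. (\<Sum>n\<in>{1..nat \<lfloor>\<rho>^j\<rfloor>}. h (real (an n) * \<xi>)) / real (nat \<lfloor>\<rho>^j\<rfloor>)) \<longlonglongrightarrow> 0"
proof -
  define Nj where "Nj j = nat \<lfloor>\<rho>^j\<rfloor>" for j :: nat
  have pj: "1 \<le> \<rho>^j" for j :: nat using \<rho> by simp
  have Nj2: "\<rho>^j / 2 \<le> real (Nj j)" for j unfolding Nj_def by (rule floor_half[OF pj])
  have Nj1: "1 \<le> real (Nj j)" for j
  proof -
    have "1 \<le> \<lfloor>\<rho>^j\<rfloor>" using pj[of j] by (simp add: le_floor_iff)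
    then show ?thesis unfolding Nj_def by simp
  qed
  define S where "S j \<xi> = (\<Sum>n\<in>{1..Nj j}. h (real (an n) * \<xi>)) / real (Nj j)" for j \<xi>
  have Sm[measurable]: "(\<lambda>\<xi>. (S j \<xi>)^2) \<in> borel_measurable borel" for j unfolding S_def by measurable
  have bnd: "(\<integral>\<^sup>+\<xi>. ennreal ((S j \<xi>)^2) \<partial>P) \<le> ennreal (KV / real (Nj j))" for j
  proof -
    have eq: "(S j \<xi>)^2 = (\<Sum>n\<in>{1..Nj j}. h (real (an n) * \<xi>))^2 / (real (Nj j))^2" for \<xi>
      unfolding S_def by (simp add: power_divide)
    have I: "integrable P (\<lambda>\<xi>. (S j \<xi>)^2)" unfolding eq using V(1)[OF mean0] by simp
    have "(\<integral>\<xi>. (S j \<xi>)^2 \<partial>P) = (\<integral>\<xi>. (\<Sum>n\<in>{1..Nj j}. h (real (an n) * \<xi>))^2 \<partial>P) / (real (Nj j))^2"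
      unfolding eq by simp
    also have "\<dots> \<le> KV * real (Nj j) / (real (Nj j))^2"
      by (intro divide_right_mono V(2)[OF mean0]) simp
    also have "\<dots> = KV / real (Nj j)" using Nj1[of j] by (simp add: power2_eq_square)
    finally show ?thesis by (subst GC2[OF I]) (auto intro: ennreal_leI)
  qed
  have c_le: "KV / real (Nj j) \<le> 2 * KV * (1 / \<rho>)^j" for j
  proof -
    have "KV / real (Nj j) \<le> KV / (\<rho>^j / 2)"
      using Nj2[of j] Nj1[of j] \<rho> KV0 by (intro divide_left_mono) (auto intro!: mult_pos_pos)
    also have "\<dots> = 2 * KV * (1 / \<rho>)^j" by (simp add: power_one_over field_simps)
    finally show ?thesis .
  qed
  have summ: "summable (\<lambda>j. KV / real (Nj j))"
  proof (rule summable_comparison_test[where g="\<lambda>j. 2 * KV * (1 / \<rho>)^j"])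
    show "\<exists>N. \<forall>n\<ge>N. norm (KV / real (Nj n)) \<le> 2 * KV * (1 / \<rho>) ^ n"
      using c_le KV0 Nj1 by auto
    show "summable (\<lambda>j. 2 * KV * (1 / \<rho>)^j)" using \<rho> by (intro summable_mult summable_geometric) auto
  qed
  have "AE \<xi> in P. (\<lambda>j. (S j \<xi>)^2) \<longlonglongrightarrow> 0"
    by (rule AE_tendsto_summable[OF Sm _ bnd summ]) (use KV0 Nj1 in auto)
  then show ?thesis
  proof (rule eventually_mono)
    fix \<xi> assume "(\<lambda>j. (S j \<xi>)^2) \<longlonglongrightarrow> 0"
    then have "(\<lambda>j. S j \<xi>) \<longlonglongrightarrow> 0" by (rule sq_tendsto_zero)
    then show "(\<lambda>j. (\<Sum>n\<in>{1..nat \<lfloor>\<rho>^j\<rfloor>}. h (real (an n) * \<xi>)) / real (nat \<lfloor>\<rho>^j\<rfloor>)) \<longlonglongrightarrow> 0"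
      unfolding S_def Nj_def .
  qed
qed

end


lemma Nseq_props:
  fixes \<rho> :: real assumes \<rho>: "1 < \<rho>"
  defines "Ns \<equiv> \<lambda>j::nat. nat \<lfloor>\<rho>^j\<rfloor>"
  shows "\<And>j. 1 \<le> Ns j" "mono Ns" "\<And>M. \<exists>j. M < Ns j"
    "(\<lambda>j. real (Ns (Suc j)) / real (Ns j)) \<longlonglongrightarrow> \<rho>"
proof -
  have pj: "1 \<le> \<rho>^j" for j :: nat using \<rho> by simp
  show N1: "1 \<le> Ns j" for j
  proof -
    have "1 \<le> \<lfloor>\<rho>^j\<rfloor>" using pj[of j] by (simp add: le_floor_iff)
    then show ?thesis unfolding Ns_def by (simp add: le_nat_iff)
  qed
  show "mono Ns"
  proof (rule monoI)
    fix i j :: nat assume "i \<le> j"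
    then have "\<rho>^i \<le> \<rho>^j" using \<rho> by (intro power_increasing) auto
    then show "Ns i \<le> Ns j" unfolding Ns_def by (intro nat_mono floor_mono)
  qed
  have up: "real (Ns j) \<le> \<rho>^j" for j
    unfolding Ns_def using pj[of j] by (simp add: of_nat_nat)
  have lo: "\<rho>^j - 1 < real (Ns j)" for j
    unfolding Ns_def using pj[of j] by (simp add: of_nat_nat)
  show "\<exists>j. M < Ns j" for M
  proof -
    obtain j where "real M + 1 < \<rho>^j" using real_arch_pow[OF \<rho>] by blast
    then show ?thesis using lo[of j] by (intro exI[of _ j]) linarith
  qed
  have ir: "(\<lambda>j. (1/\<rho>)^j) \<longlonglongrightarrow> 0" using \<rho> by (intro LIMSEQ_power_zero) auto
  have L: "(\<lambda>j. \<rho> - (1/\<rho>)^j) \<longlonglongrightarrow> \<rho> - 0" by (intro tendsto_intros ir)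
  have U: "(\<lambda>j. \<rho> / (1 - (1/\<rho>)^j)) \<longlonglongrightarrow> \<rho> / (1 - 0)" by (intro tendsto_intros ir) simp
  show "(\<lambda>j. real (Ns (Suc j)) / real (Ns j)) \<longlonglongrightarrow> \<rho>"
  proof (rule tendsto_sandwich[OF _ _ _ ])
    show "\<forall>\<^sub>F j in sequentially. \<rho> - (1/\<rho>)^j \<le> real (Ns (Suc j)) / real (Ns j)"
    proof (rule always_eventually, rule allI)
      fix j
      have N0: "0 < real (Ns j)" using N1[of j] by simp
      have "(\<rho> - (1/\<rho>)^j) * real (Ns j) \<le> (\<rho> - (1/\<rho>)^j) * \<rho>^j"
      proof -
        have "(1/\<rho>)^j \<le> 1" using \<rho> by (intro power_le_one) auto
        then show ?thesis using up[of j] \<rho> by (intro mult_left_mono) auto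
      qed
      also have "\<dots> = \<rho>^(Suc j) - 1" using \<rho> by (simp add: power_one_over field_simps)
      also have "\<dots> \<le> real (Ns (Suc j))" using lo[of "Suc j"] by simp
      finally show "\<rho> - (1/\<rho>)^j \<le> real (Ns (Suc j)) / real (Ns j)" using N0 by (simp add: pos_le_divide_eq)
    qed
    show "\<forall>\<^sub>F j in sequentially. real (Ns (Suc j)) / real (Ns j) \<le> \<rho> / (1 - (1/\<rho>)^j)"
    proof (rule eventually_sequentiallyI[of 1])
      fix j :: nat assume j: "1 \<le> j"
      have N0: "0 < real (Ns j)" using N1[of j] by simp
      have q: "(1/\<rho>)^j < 1" using \<rho> j by (subst power_less_one_iff) auto
      have "real (Ns (Suc j)) * (1 - (1/\<rho>)^j) \<le> \<rho>^(Suc j) * (1 - (1/\<rho>)^j)"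
        using up[of "Suc j"] q by (intro mult_right_mono) auto
      also have "\<dots> = \<rho> * (\<rho>^j - 1)" using \<rho> by (simp add: power_one_over field_simps)
      also have "\<dots> \<le> \<rho> * real (Ns j)" using lo[of j] \<rho> by (intro mult_left_mono) auto
      finally have "real (Ns (Suc j)) * (1 - (1/\<rho>)^j) \<le> \<rho> * real (Ns j)" .
      then show "real (Ns (Suc j)) / real (Ns j) \<le> \<rho> / (1 - (1/\<rho>)^j)"
        using N0 q by (simp add: divide_le_eq le_divide_eq mult.commute)
    qed
  qed (use L U in simp_all)
qed


lemma sum_split1: fixes f :: "nat \<Rightarrow> real" assumes "a \<le> b"
  shows "(\<Sum>n\<in>{1..b}. f n) = (\<Sum>n\<in>{1..a}. f n) + (\<Sum>n\<in>{Suc a..b}. f n)"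
proof -
  have "{1..b} = {1..a} \<union> {Suc a..b}" using assms by auto
  then show ?thesis by (simp add: sum.union_disjoint ivl_disj_int)
qed

lemma sw_one:
  fixes x y :: "nat \<Rightarrow> real" and \<rho> \<mu> \<nu> \<epsilon> :: real
  assumes \<rho>: "1 < \<rho>" and xy: "\<And>n. \<bar>x n\<bar> \<le> y n"
    and cx: "(\<lambda>j. (\<Sum>n\<in>{1..nat \<lfloor>\<rho>^j\<rfloor>}. x n) / real (nat \<lfloor>\<rho>^j\<rfloor>)) \<longlonglongrightarrow> \<mu>"
    and cy: "(\<lambda>j. (\<Sum>n\<in>{1..nat \<lfloor>\<rho>^j\<rfloor>}. y n) / real (nat \<lfloor>\<rho>^j\<rfloor>)) \<longlonglongrightarrow> \<nu>"
    and \<epsilon>: "0 < \<epsilon>"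
  shows "\<exists>M. \<forall>N\<ge>M. \<bar>(\<Sum>n\<in>{1..N}. x n) / real N - \<mu>\<bar> < (\<nu> + \<bar>\<mu>\<bar>) * (\<rho> - 1) + \<epsilon>"
proof -
  define Ns where "Ns j = nat \<lfloor>\<rho>^j\<rfloor>" for j :: nat
  define X where "X N = (\<Sum>n\<in>{1..N}. x n)" for N
  define Y where "Y N = (\<Sum>n\<in>{1..N}. y n)" for N
  note NP = Nseq_props[OF \<rho>, folded Ns_def]
  have N1: "1 \<le> Ns j" for j by (rule NP(1))
  have Nmono: "i \<le> j \<Longrightarrow> Ns i \<le> Ns j" for i j using NP(2) by (simp add: mono_def)
  have y0: "0 \<le> y n" for n using xy[of n] by linarith
  define e where "e j = (Y (Ns (Suc j)) - Y (Ns j)) / real (Ns j) + \<bar>X (Ns j) / real (Ns j) - \<mu>\<bar>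
      + \<bar>\<mu>\<bar> * (real (Ns (Suc j)) / real (Ns j) - 1)" for j
  have cx': "(\<lambda>j. X (Ns j) / real (Ns j)) \<longlonglongrightarrow> \<mu>" using cx unfolding X_def Ns_def .
  have cy': "(\<lambda>j. Y (Ns j) / real (Ns j)) \<longlonglongrightarrow> \<nu>" using cy unfolding Y_def Ns_def .
  have ratio: "(\<lambda>j. real (Ns (Suc j)) / real (Ns j)) \<longlonglongrightarrow> \<rho>" by (rule NP(4))
  have eq1: "Y (Ns (Suc j)) / real (Ns j) = (Y (Ns (Suc j)) / real (Ns (Suc j))) * (real (Ns (Suc j)) / real (Ns j))" for j
    using N1[of "Suc j"] by simp
  have "(\<lambda>j. (Y (Ns (Suc j)) / real (Ns (Suc j))) * (real (Ns (Suc j)) / real (Ns j))) \<longlonglongrightarrow> \<nu> * \<rho>"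
    using cy'[THEN LIMSEQ_Suc] ratio by (rule tendsto_mult)
  then have t1: "(\<lambda>j. Y (Ns (Suc j)) / real (Ns j)) \<longlonglongrightarrow> \<nu> * \<rho>" unfolding eq1 .
  have t2: "(\<lambda>j. \<bar>X (Ns j) / real (Ns j) - \<mu>\<bar>) \<longlonglongrightarrow> \<bar>\<mu> - \<mu>\<bar>" by (intro tendsto_intros cx')
  have "(\<lambda>j. e j) \<longlonglongrightarrow> (\<nu> * \<rho> - \<nu>) + \<bar>\<mu> - \<mu>\<bar> + \<bar>\<mu>\<bar> * (\<rho> - 1)"
    unfolding e_def diff_divide_distrib by (intro tendsto_intros t1 t2 cy' ratio)
  then have "(\<lambda>j. e j) \<longlonglongrightarrow> (\<nu> + \<bar>\<mu>\<bar>) * (\<rho> - 1)" by (simp add: algebra_simps)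
  then have "eventually (\<lambda>j. e j < (\<nu> + \<bar>\<mu>\<bar>) * (\<rho> - 1) + \<epsilon>) sequentially"
    using \<epsilon> by (intro order_tendstoD(2)) auto
  then obtain J where J: "\<And>j. J \<le> j \<Longrightarrow> e j < (\<nu> + \<bar>\<mu>\<bar>) * (\<rho> - 1) + \<epsilon>"
    unfolding eventually_sequentially by blast
  show ?thesis
  proof (intro exI[of _ "Ns J"] allI impI)
    fix N assume NJ: "Ns J \<le> N"
    obtain j0 where j0: "N < Ns j0" using NP(3) by blast
    define k where "k = (LEAST j. N < Ns j)"
    have k1: "N < Ns k" unfolding k_def by (rule LeastI[of _ j0]) (rule j0)
    have k2: "\<not> N < Ns i" if "i < k" for i using not_less_Least[OF that[unfolded k_def]] by simp
    have kJ: "J < k"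
    proof (rule ccontr)
      assume "\<not> J < k" then have "Ns k \<le> Ns J" by (intro Nmono) simp
      then show False using k1 NJ by simp
    qed
    then obtain j where kj: "k = Suc j" and jJ: "J \<le> j" by (cases k) auto
    have lo: "Ns j \<le> N" using k2[of j] kj by simp
    have hi: "N < Ns (Suc j)" using k1 kj by simp
    have Nj0: "0 < real (Ns j)" using N1[of j] by simp
    have NN: "real (Ns j) \<le> real N" using lo by simp
    have D1: "\<bar>X N - X (Ns j)\<bar> \<le> Y (Ns (Suc j)) - Y (Ns j)"
    proof -
      have "X N - X (Ns j) = (\<Sum>n\<in>{Suc (Ns j)..N}. x n)" unfolding X_def using sum_split1[OF lo] by simp
      then have "\<bar>X N - X (Ns j)\<bar> \<le> (\<Sum>n\<in>{Suc (Ns j)..N}. y n)"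
        using sum_abs[of x "{Suc (Ns j)..N}"] sum_mono[of "{Suc (Ns j)..N}" "\<lambda>n. \<bar>x n\<bar>" y, OF xy] by linarith
      also have "\<dots> \<le> (\<Sum>n\<in>{Suc (Ns j)..Ns (Suc j)}. y n)"
        using hi y0 by (intro sum_mono2) auto
      also have "\<dots> = Y (Ns (Suc j)) - Y (Ns j)" unfolding Y_def using sum_split1[of "Ns j" "Ns (Suc j)" y] hi lo by simp
      finally show ?thesis .
    qed
    have D2: "real N - real (Ns j) \<le> real (Ns (Suc j)) - real (Ns j)" using hi by simp
    have "\<bar>X N / real N - \<mu>\<bar> = \<bar>X N - \<mu> * real N\<bar> / real N"
      using Nj0 NN by (simp add: field_simps abs_divide)
    also have "\<bar>X N - \<mu> * real N\<bar> \<le> \<bar>X N - X (Ns j)\<bar> + \<bar>X (Ns j) - \<mu> * real (Ns j)\<bar> + \<bar>\<mu>\<bar> * (real N - real (Ns j))"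
    proof -
      have "\<bar>\<mu> * real N - \<mu> * real (Ns j)\<bar> = \<bar>\<mu>\<bar> * (real N - real (Ns j))"
        using NN by (simp add: abs_mult right_diff_distrib[symmetric])
      then show ?thesis by linarith
    qed
    also have "\<dots> \<le> (Y (Ns (Suc j)) - Y (Ns j)) + \<bar>X (Ns j) - \<mu> * real (Ns j)\<bar> + \<bar>\<mu>\<bar> * (real (Ns (Suc j)) - real (Ns j))"
      using D1 D2 by (intro add_mono mult_left_mono) auto
    finally have "\<bar>X N / real N - \<mu>\<bar> \<le> ((Y (Ns (Suc j)) - Y (Ns j)) + \<bar>X (Ns j) - \<mu> * real (Ns j)\<bar>
        + \<bar>\<mu>\<bar> * (real (Ns (Suc j)) - real (Ns j))) / real N"
      using Nj0 NN by (simp add: divide_right_mono)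
    also have "\<dots> \<le> ((Y (Ns (Suc j)) - Y (Ns j)) + \<bar>X (Ns j) - \<mu> * real (Ns j)\<bar>
        + \<bar>\<mu>\<bar> * (real (Ns (Suc j)) - real (Ns j))) / real (Ns j)"
    proof (rule divide_left_mono[OF NN])
      show "0 \<le> (Y (Ns (Suc j)) - Y (Ns j)) + \<bar>X (Ns j) - \<mu> * real (Ns j)\<bar> + \<bar>\<mu>\<bar> * (real (Ns (Suc j)) - real (Ns j))"
        using D1 D2 NN by (intro add_nonneg_nonneg mult_nonneg_nonneg) auto
      show "0 < real N * real (Ns j)" using Nj0 NN by simp
    qed
    also have "\<dots> = e j"
    proof -
      have "\<bar>X (Ns j) - \<mu> * real (Ns j)\<bar> / real (Ns j) = \<bar>X (Ns j) / real (Ns j) - \<mu>\<bar>"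
        using Nj0 by (simp add: field_simps abs_divide)
      moreover have "\<bar>\<mu>\<bar> * (real (Ns (Suc j)) - real (Ns j)) / real (Ns j) = \<bar>\<mu>\<bar> * (real (Ns (Suc j)) / real (Ns j) - 1)"
        using Nj0 by (simp add: field_simps)
      ultimately show ?thesis unfolding e_def by (simp add: add_divide_distrib)
    qed
    also have "\<dots> < (\<nu> + \<bar>\<mu>\<bar>) * (\<rho> - 1) + \<epsilon>" by (rule J[OF jJ])
    finally show "\<bar>(\<Sum>n\<in>{1..N}. x n) / real N - \<mu>\<bar> < (\<nu> + \<bar>\<mu>\<bar>) * (\<rho> - 1) + \<epsilon>"
      unfolding X_def .
  qed
qed


lemma sandwich:
  fixes x y :: "nat \<Rightarrow> real" and \<mu> \<nu> :: real
  assumes xy: "\<And>n. \<bar>x n\<bar> \<le> y n"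
    and cx: "\<And>k::nat. (\<lambda>j. (\<Sum>n\<in>{1..nat \<lfloor>(1 + 1 / (real k + 1))^j\<rfloor>}. x n) / real (nat \<lfloor>(1 + 1 / (real k + 1))^j\<rfloor>)) \<longlonglongrightarrow> \<mu>"
    and cy: "\<And>k::nat. (\<lambda>j. (\<Sum>n\<in>{1..nat \<lfloor>(1 + 1 / (real k + 1))^j\<rfloor>}. y n) / real (nat \<lfloor>(1 + 1 / (real k + 1))^j\<rfloor>)) \<longlonglongrightarrow> \<nu>"
  shows "(\<lambda>N. (\<Sum>n\<in>{1..N}. x n) / real N) \<longlonglongrightarrow> \<mu>"
proof (rule LIMSEQ_I)
  fix \<epsilon> :: real assume \<epsilon>: "0 < \<epsilon>"
  have y0: "0 \<le> y n" for n using xy[of n] by linarith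
  have \<nu>0: "0 \<le> \<nu>"
  proof (rule tendsto_lowerbound[OF cy[of 0]])
    show "\<forall>\<^sub>F j in sequentially. 0 \<le> (\<Sum>n\<in>{1..nat \<lfloor>(1 + 1 / (real 0 + 1))^j\<rfloor>}. y n) / real (nat \<lfloor>(1 + 1 / (real 0 + 1))^j\<rfloor>)"
      using y0 by (intro always_eventually allI divide_nonneg_nonneg sum_nonneg) auto
  qed simp
  obtain k :: nat where k: "2 * (\<nu> + \<bar>\<mu>\<bar>) / \<epsilon> < real k" using reals_Archimedean2 by blast
  define \<rho> where "\<rho> = 1 + 1 / (real k + 1)"
  have \<rho>: "1 < \<rho>" unfolding \<rho>_def by simp
  have small: "(\<nu> + \<bar>\<mu>\<bar>) * (\<rho> - 1) \<le> \<epsilon> / 2"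
  proof -
    have "2 * (\<nu> + \<bar>\<mu>\<bar>) < real k * \<epsilon>" using k \<epsilon> by (simp add: divide_less_eq)
    then have "2 * (\<nu> + \<bar>\<mu>\<bar>) \<le> \<epsilon> * (real k + 1)" using \<epsilon> by (simp add: algebra_simps)
    then show ?thesis unfolding \<rho>_def using \<nu>0 by (simp add: field_simps)
  qed
  obtain M where M: "\<And>N. M \<le> N \<Longrightarrow> \<bar>(\<Sum>n\<in>{1..N}. x n) / real N - \<mu>\<bar> < (\<nu> + \<bar>\<mu>\<bar>) * (\<rho> - 1) + \<epsilon> / 2"
    using sw_one[OF \<rho> xy cx[of k, folded \<rho>_def] cy[of k, folded \<rho>_def], of "\<epsilon>/2"] \<epsilon> by auto
  show "\<exists>no. \<forall>n\<ge>no. norm ((\<Sum>n\<in>{1..n}. x n) / real n - \<mu>) < \<epsilon>"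
  proof (intro exI[of _ M] allI impI)
    fix N assume "M \<le> N"
    from M[OF this] small show "norm ((\<Sum>n\<in>{1..N}. x n) / real N - \<mu>) < \<epsilon>" by simp
  qed
qed


lemma AE_affine:
  fixes R :: "real \<Rightarrow> bool" and c t :: real
  assumes c: "c \<noteq> 0" and ae: "AE y in lborel. R y"
  shows "AE x in lborel. R (t + c * x)"
proof -
  obtain N where N: "N \<in> null_sets lborel" "{y \<in> space lborel. \<not> R y} \<subseteq> N"
    using ae unfolding eventually_ae_filter by blast
  have Nm[measurable]: "N \<in> sets borel" using N(1) by auto
  define T where "T x = t + c * x" for x :: real
  have Tm[measurable]: "T \<in> borel_measurable borel" unfolding T_def by simp
  have "(\<integral>\<^sup>+y. indicator N y \<partial>lborel) = ennreal \<bar>c\<bar> * (\<integral>\<^sup>+x. indicator N (t + c * x) \<partial>lborel)"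
    by (rule nn_integral_real_affine[OF _ c]) simp
  moreover have "(\<integral>\<^sup>+y. indicator N y \<partial>lborel) = 0" using N(1) by (simp add: null_setsD1)
  moreover have "(\<integral>\<^sup>+x. indicator N (t + c * x) \<partial>lborel) = emeasure lborel (T -` N)"
  proof -
    have "(\<lambda>x. indicator N (t + c * x) :: ennreal) = indicator (T -` N)"
      by (auto simp: T_def indicator_def)
    moreover have "T -` N \<in> sets borel" using measurable_sets[OF Tm Nm] by simp
    ultimately show ?thesis by simp
  qed
  ultimately have "emeasure lborel (T -` N) = 0" using c by (simp add: ennreal_eq_0_iff)
  moreover have "T -` N \<in> sets lborel" using measurable_sets[OF Tm Nm] by simp
  ultimately have "T -` N \<in> null_sets lborel" by auto
  moreover have "{x \<in> space lborel. \<not> R (t + c * x)} \<subseteq> T -` N" using N(2) by (auto simp: T_def)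
  ultimately show ?thesis by (rule AE_I')
qed

lemma AE_P_to_lborel:
  fixes Q :: "real \<Rightarrow> bool"
  assumes ae: "AE x in P. Q x" and inv: "\<And>x k. Q (x + real_of_int k) = Q x"
  shows "AE x in lborel. Q x"
proof -
  have "AE x in lborel. 0 < ennreal (indicator {0..<1} x) \<longrightarrow> Q x"
    using ae unfolding P_def by (subst (asm) AE_density) auto
  then have ae0: "AE x in lborel. 0 \<le> x \<and> x < 1 \<longrightarrow> Q x"
    by (rule eventually_mono) (auto simp: indicator_def)
  have "AE x in lborel. 0 \<le> real_of_int k + 1 * x \<and> real_of_int k + 1 * x < 1 \<longrightarrow> Q (real_of_int k + 1 * x)" for k :: int
    by (rule AE_affine[OF _ ae0]) simp
  then have "\<forall>k::int. AE x in lborel. 0 \<le> real_of_int k + 1 * x \<and> real_of_int k + 1 * x < 1 \<longrightarrow> Q (real_of_int k + 1 * x)"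
    by blast
  then have "AE x in lborel. \<forall>k::int. 0 \<le> real_of_int k + 1 * x \<and> real_of_int k + 1 * x < 1 \<longrightarrow> Q (real_of_int k + 1 * x)"
    by (subst AE_all_countable) simp
  then show ?thesis
  proof (rule eventually_mono)
    fix x assume H: "\<forall>k::int. 0 \<le> real_of_int k + 1 * x \<and> real_of_int k + 1 * x < 1 \<longrightarrow> Q (real_of_int k + 1 * x)"
    have "0 \<le> real_of_int (- \<lfloor>x\<rfloor>) + 1 * x \<and> real_of_int (- \<lfloor>x\<rfloor>) + 1 * x < 1" by linarith
    then have "Q (real_of_int (- \<lfloor>x\<rfloor>) + 1 * x)" using H by blast
    then have "Q (x + real_of_int (- \<lfloor>x\<rfloor>))" by (simp add: add.commute)
    then show "Q x" using inv[of x "- \<lfloor>x\<rfloor>"] by simp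
  qed
qed


lemma hyp_center:
  assumes "hyp h C \<alpha>"
  shows "hyp (\<lambda>x. h x - (\<integral>x. h x \<partial>P)) C \<alpha>"
proof -
  interpret hyp h C \<alpha> by (rule assms)
  define \<mu> where "\<mu> = (\<integral>x. h x \<partial>P)"
  show ?thesis unfolding \<mu>_def[symmetric]
  proof
    show "(\<lambda>x. h x - \<mu>) \<in> borel_measurable borel" by simp
    show "periodic1 (\<lambda>x. h x - \<mu>)" using per by (simp add: periodic1_def)
    have "(\<lambda>x. (h x - \<mu>)^2) = (\<lambda>x. (h x)^2 - 2 * \<mu> * h x + \<mu>^2)"
      by (simp add: power2_eq_square algebra_simps)
    then show "integrable P (\<lambda>x. (h x - \<mu>)^2)" using L2 hint by simp
    show "1/2 < \<alpha>" by (rule alpha)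
    show "0 \<le> C" by (rule C0)
    fix \<delta> :: real assume "0 < \<delta>" "\<delta> \<le> 1"
    then show "(\<integral>\<^sup>+x. ennreal \<bar>h (x + \<delta>) - \<mu> - (h x - \<mu>)\<bar> \<partial>P) \<le> ennreal (C * \<delta> powr \<alpha>)"
      using modc by simp
  qed
qed

lemma hyp_abs:
  assumes "hyp h C \<alpha>"
  shows "hyp (\<lambda>x. \<bar>h x\<bar>) C \<alpha>"
proof -
  interpret hyp h C \<alpha> by (rule assms)
  show ?thesis
  proof
    show "(\<lambda>x. \<bar>h x\<bar>) \<in> borel_measurable borel" by simp
    show "periodic1 (\<lambda>x. \<bar>h x\<bar>)" using per by (simp add: periodic1_def)
    show "integrable P (\<lambda>x. \<bar>h x\<bar>^2)" using L2 by simp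
    show "1/2 < \<alpha>" by (rule alpha)
    show "0 \<le> C" by (rule C0)
    fix \<delta> :: real assume d: "0 < \<delta>" "\<delta> \<le> 1"
    have "(\<integral>\<^sup>+x. ennreal \<bar>\<bar>h (x + \<delta>)\<bar> - \<bar>h x\<bar>\<bar> \<partial>P) \<le> (\<integral>\<^sup>+x. ennreal \<bar>h (x + \<delta>) - h x\<bar> \<partial>P)"
      by (intro nn_integral_mono ennreal_leI abs_triangle_ineq3)
    also have "\<dots> \<le> ennreal (C * \<delta> powr \<alpha>)" by (rule modc[OF d])
    finally show "(\<integral>\<^sup>+x. ennreal \<bar>\<bar>h (x + \<delta>)\<bar> - \<bar>h x\<bar>\<bar> \<partial>P) \<le> ennreal (C * \<delta> powr \<alpha>)" .
  qed
qed

lemma avg_shift: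
  fixes f :: "nat \<Rightarrow> real"
  assumes "1 \<le> real M"
  shows "(\<Sum>n\<in>{1..M}. f n) / real M = (\<Sum>n\<in>{1..M}. f n - \<mu>) / real M + \<mu>"
proof -
  have "(\<Sum>n\<in>{1..M}. f n - \<mu>) = (\<Sum>n\<in>{1..M}. f n) - real M * \<mu>"
    by (simp add: sum_subtractf)
  then show ?thesis using assms by (simp add: field_simps)
qed

lemma MR:
  fixes \<rho> :: real
  assumes H: "hyp h C \<alpha>" and \<rho>: "1 < \<rho>"
  shows "AE \<xi> in P. (\<lambda>j. (\<Sum>n\<in>{1..nat \<lfloor>\<rho>^j\<rfloor>}. h (real (an n) * \<xi>)) / real (nat \<lfloor>\<rho>^j\<rfloor>))
           \<longlonglongrightarrow> (\<integral>x. h x \<partial>P)"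
proof -
  define \<mu> where "\<mu> = (\<integral>x. h x \<partial>P)"
  interpret h0: hyp "\<lambda>x. h x - \<mu>" C \<alpha> unfolding \<mu>_def by (rule hyp_center[OF H])
  interpret hyp h C \<alpha> by (rule H)
  have m0: "(\<integral>x. h x - \<mu> \<partial>P) = 0" unfolding \<mu>_def using hint by (simp add: measure_P_UNIV)
  have N1: "1 \<le> real (nat \<lfloor>\<rho>^j\<rfloor>)" for j :: nat
  proof -
    have "1 \<le> \<lfloor>\<rho>^j\<rfloor>" using \<rho> by (simp add: le_floor_iff)
    then show ?thesis by simp
  qed
  show ?thesis unfolding \<mu>_def[symmetric]
    using h0.MR_mean0[OF m0 \<rho>]
  proof (rule eventually_mono)
    fix \<xi>
    assume lim: "(\<lambda>j. (\<Sum>n\<in>{1..nat \<lfloor>\<rho>^j\<rfloor>}. h (real (an n) * \<xi>) - \<mu>) / real (nat \<lfloor>\<rho>^j\<rfloor>)) \<longlonglongrightarrow> 0"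
    have eq: "(\<Sum>n\<in>{1..nat \<lfloor>\<rho>^j\<rfloor>}. h (real (an n) * \<xi>)) / real (nat \<lfloor>\<rho>^j\<rfloor>)
      = (\<Sum>n\<in>{1..nat \<lfloor>\<rho>^j\<rfloor>}. h (real (an n) * \<xi>) - \<mu>) / real (nat \<lfloor>\<rho>^j\<rfloor>) + \<mu>" for j
      by (rule avg_shift[OF N1])
    have "(\<lambda>j. (\<Sum>n\<in>{1..nat \<lfloor>\<rho>^j\<rfloor>}. h (real (an n) * \<xi>) - \<mu>) / real (nat \<lfloor>\<rho>^j\<rfloor>) + \<mu>) \<longlonglongrightarrow> 0 + \<mu>"
      by (intro tendsto_add lim tendsto_const)
    then show "(\<lambda>j. (\<Sum>n\<in>{1..nat \<lfloor>\<rho>^j\<rfloor>}. h (real (an n) * \<xi>)) / real (nat \<lfloor>\<rho>^j\<rfloor>)) \<longlonglongrightarrow> \<mu>"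
      unfolding eq by simp
  qed
qed

lemma full_real_P:
  assumes H: "hyp h C \<alpha>"
  shows "AE \<xi> in P. (\<lambda>N. (\<Sum>n\<in>{1..N}. h (real (an n) * \<xi>)) / real N) \<longlonglongrightarrow> (\<integral>x. h x \<partial>P)"
proof -
  have HA: "hyp (\<lambda>x. \<bar>h x\<bar>) C \<alpha>" by (rule hyp_abs[OF H])
  have \<rho>: "1 < 1 + 1 / (real k + 1)" for k :: nat by simp
  have "\<forall>k::nat. AE \<xi> in P.
      (\<lambda>j. (\<Sum>n\<in>{1..nat \<lfloor>(1 + 1 / (real k + 1))^j\<rfloor>}. h (real (an n) * \<xi>)) / real (nat \<lfloor>(1 + 1 / (real k + 1))^j\<rfloor>))
           \<longlonglongrightarrow> (\<integral>x. h x \<partial>P) \<and>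
      (\<lambda>j. (\<Sum>n\<in>{1..nat \<lfloor>(1 + 1 / (real k + 1))^j\<rfloor>}. \<bar>h (real (an n) * \<xi>)\<bar>) / real (nat \<lfloor>(1 + 1 / (real k + 1))^j\<rfloor>))
           \<longlonglongrightarrow> (\<integral>x. \<bar>h x\<bar> \<partial>P)"
    using MR[OF H \<rho>] MR[OF HA \<rho>] by (auto intro: AE_conjI)
  then have "AE \<xi> in P. \<forall>k::nat.
      (\<lambda>j. (\<Sum>n\<in>{1..nat \<lfloor>(1 + 1 / (real k + 1))^j\<rfloor>}. h (real (an n) * \<xi>)) / real (nat \<lfloor>(1 + 1 / (real k + 1))^j\<rfloor>))
           \<longlonglongrightarrow> (\<integral>x. h x \<partial>P) \<and>
      (\<lambda>j. (\<Sum>n\<in>{1..nat \<lfloor>(1 + 1 / (real k + 1))^j\<rfloor>}. \<bar>h (real (an n) * \<xi>)\<bar>) / real (nat \<lfloor>(1 + 1 / (real k + 1))^j\<rfloor>))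
           \<longlonglongrightarrow> (\<integral>x. \<bar>h x\<bar> \<partial>P)"
    by (subst AE_all_countable) simp
  then show ?thesis
  proof (rule eventually_mono)
    fix \<xi> assume A: "\<forall>k::nat.
      (\<lambda>j. (\<Sum>n\<in>{1..nat \<lfloor>(1 + 1 / (real k + 1))^j\<rfloor>}. h (real (an n) * \<xi>)) / real (nat \<lfloor>(1 + 1 / (real k + 1))^j\<rfloor>))
           \<longlonglongrightarrow> (\<integral>x. h x \<partial>P) \<and>
      (\<lambda>j. (\<Sum>n\<in>{1..nat \<lfloor>(1 + 1 / (real k + 1))^j\<rfloor>}. \<bar>h (real (an n) * \<xi>)\<bar>) / real (nat \<lfloor>(1 + 1 / (real k + 1))^j\<rfloor>))
           \<longlonglongrightarrow> (\<integral>x. \<bar>h x\<bar> \<partial>P)"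
    show "(\<lambda>N. (\<Sum>n\<in>{1..N}. h (real (an n) * \<xi>)) / real N) \<longlonglongrightarrow> (\<integral>x. h x \<partial>P)"
      by (rule sandwich[where y="\<lambda>n. \<bar>h (real (an n) * \<xi>)\<bar>"]) (use A in auto)
  qed
qed

lemma full_real:
  assumes H: "hyp h C \<alpha>"
  shows "AE \<xi> in lborel. (\<lambda>N. (\<Sum>n\<in>{1..N}. h (real (an n) * \<xi>)) / real N) \<longlonglongrightarrow> (\<integral>x. h x \<partial>P)"
proof (rule AE_P_to_lborel[OF full_real_P[OF H]])
  interpret hyp h C \<alpha> by (rule H)
  fix x :: real and k :: int
  have "h (real (an n) * (x + real_of_int k)) = h (real (an n) * x)" for n
  proof -
    have "real (an n) * (x + real_of_int k) = real (an n) * x + real_of_int (int (an n) * k)"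
      by (simp add: algebra_simps)
    then show ?thesis using per_int[OF per, of "real (an n) * x" "int (an n) * k"] by simp
  qed
  then show "((\<lambda>N. (\<Sum>n\<in>{1..N}. h (real (an n) * (x + real_of_int k))) / real N) \<longlonglongrightarrow> (\<integral>x. h x \<partial>P))
      = ((\<lambda>N. (\<Sum>n\<in>{1..N}. h (real (an n) * x)) / real N) \<longlonglongrightarrow> (\<integral>x. h x \<partial>P))" by simp
qed


lemma leb_to_P:
  fixes u :: "real \<Rightarrow> 'b::{banach, second_countable_topology}"
  assumes [measurable]: "u \<in> borel_measurable borel"
  shows "set_integrable lebesgue {0..1} u \<longleftrightarrow> integrable P u"
    "(LINT x:{0..1}|lebesgue. u x) = (\<integral>x. u x \<partial>P)"
proof -
  have ae: "AE x in lborel. indicator {0..1} x *\<^sub>R u x = indicator {0..<1} x *\<^sub>R u x"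
    using AE_lborel_singleton[of 1] by eventually_elim (auto simp: indicator_def)
  have "set_integrable lebesgue {0..1} u \<longleftrightarrow> integrable lborel (\<lambda>x. indicator {0..1} x *\<^sub>R u x)"
    unfolding set_integrable_def by (rule integrable_completion) simp
  also have "\<dots> \<longleftrightarrow> integrable lborel (\<lambda>x. indicator {0..<1} x *\<^sub>R u x)"
    by (rule integrable_cong_AE) (use ae in auto)
  also have "\<dots> \<longleftrightarrow> integrable P u"
    unfolding P_def by (subst integrable_density) auto
  finally show "set_integrable lebesgue {0..1} u \<longleftrightarrow> integrable P u" .
  have "(LINT x:{0..1}|lebesgue. u x) = (\<integral>x. indicator {0..1} x *\<^sub>R u x \<partial>lborel)"
    unfolding set_lebesgue_integral_def by (rule integral_completion) simp
  also have "\<dots> = (\<integral>x. indicator {0..<1} x *\<^sub>R u x \<partial>lborel)"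
    by (rule integral_cong_AE) (use ae in auto)
  also have "\<dots> = (\<integral>x. u x \<partial>P)"
    unfolding P_def by (subst integral_density) auto
  finally show "(LINT x:{0..1}|lebesgue. u x) = (\<integral>x. u x \<partial>P)" .
qed

lemma leb_cong:
  fixes u v :: "real \<Rightarrow> 'b::{banach, second_countable_topology}"
  assumes um: "u \<in> borel_measurable lebesgue" and vm: "v \<in> borel_measurable lebesgue"
    and ae: "AE x in lborel. u x = v x"
  shows "set_integrable lebesgue {0..1} u \<longleftrightarrow> set_integrable lebesgue {0..1} v"
    "(LINT x:{0..1}|lebesgue. u x) = (LINT x:{0..1}|lebesgue. v x)"
proof -
  have im: "(\<lambda>x::real. indicator {0..1} x :: real) \<in> borel_measurable lebesgue"
    by (rule measurable_completion, rule borel_measurable_indicator) simp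
  have m1: "(\<lambda>x. indicator {0..1} x *\<^sub>R u x) \<in> borel_measurable lebesgue"
    by (rule borel_measurable_scaleR[OF im um])
  have m2: "(\<lambda>x. indicator {0..1} x *\<^sub>R v x) \<in> borel_measurable lebesgue"
    by (rule borel_measurable_scaleR[OF im vm])
  have ae': "AE x in lebesgue. indicator {0..1} x *\<^sub>R u x = indicator {0..1} x *\<^sub>R v x"
    using AE_completion[OF ae] by (rule eventually_mono) simp
  show "set_integrable lebesgue {0..1} u \<longleftrightarrow> set_integrable lebesgue {0..1} v"
    unfolding set_integrable_def by (rule integrable_cong_AE[OF m1 m2 ae'])
  show "(LINT x:{0..1}|lebesgue. u x) = (LINT x:{0..1}|lebesgue. v x)"
    unfolding set_lebesgue_integral_def by (rule integral_cong_AE[OF m1 m2 ae'])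
qed

lemma borel_version:
  fixes f :: "real \<Rightarrow> complex"
  assumes per: "periodic1 f" and meas[measurable]: "f \<in> borel_measurable lebesgue"
  obtains hr hi :: "real \<Rightarrow> real" where "hr \<in> borel_measurable borel" "hi \<in> borel_measurable borel"
    "periodic1 hr" "periodic1 hi" "AE x in lborel. f x = Complex (hr x) (hi x)"
proof -
  have "(\<lambda>x. Re (f x)) \<in> borel_measurable (completion lborel)" by measurable
  from completion_ex_borel_measurable_real[OF this]
  obtain gr where gr[measurable]: "gr \<in> borel_measurable lborel" and aer: "AE x in lborel. Re (f x) = gr x" by blast
  have "(\<lambda>x. Im (f x)) \<in> borel_measurable (completion lborel)" by measurable
  from completion_ex_borel_measurable_real[OF this]
  obtain gi where gi[measurable]: "gi \<in> borel_measurable lborel" and aei: "AE x in lborel. Im (f x) = gi x" by blast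
  have grb[measurable]: "gr \<in> borel_measurable borel" using gr by simp
  have gib[measurable]: "gi \<in> borel_measurable borel" using gi by simp
  define fr where "fr x = x - real_of_int \<lfloor>x\<rfloor>" for x :: real
  have frm[measurable]: "fr \<in> borel_measurable borel" unfolding fr_def[abs_def] by measurable
  have fr_shift: "fr (x + real_of_int k) = fr x" for x k unfolding fr_def by simp
  have fr01: "0 \<le> fr x" "fr x < 1" for x unfolding fr_def by linarith+
  have fr_id: "0 \<le> x \<Longrightarrow> x < 1 \<Longrightarrow> fr x = x" for x unfolding fr_def by (simp add: floor_eq_iff)
  define hr where "hr x = gr (fr x)" for x
  define hi where "hi x = gi (fr x)" for x
  have hm[measurable]: "hr \<in> borel_measurable borel" "hi \<in> borel_measurable borel"
    unfolding hr_def[abs_def] hi_def[abs_def] by measurable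
  have "periodic1 hr" "periodic1 hi"
    unfolding periodic1_def hr_def hi_def using fr_shift[of _ 1] by auto
  define Q where "Q x = (f (fr x) = Complex (gr (fr x)) (gi (fr x)))" for x
  have "AE x in lborel. 0 \<le> x \<and> x < 1 \<longrightarrow> Q x"
    using aer aei
  proof eventually_elim
    case (elim x)
    show ?case
    proof
      assume "0 \<le> x \<and> x < 1"
      then have "fr x = x" by (intro fr_id) auto
      then show "Q x" unfolding Q_def using elim by (simp add: complex_eq_iff)
    qed
  qed
  then have "AE x in P. Q x"
    unfolding P_def by (subst AE_density) (auto elim!: eventually_mono simp: indicator_def)
  from AE_P_to_lborel[OF this] have "AE x in lborel. Q x"
    unfolding Q_def using fr_shift by simp
  then have "AE x in lborel. f x = Complex (hr x) (hi x)"
  proof (rule eventually_mono)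
    fix x assume "Q x"
    have "f (x + real_of_int (- \<lfloor>x\<rfloor>)) = f x" by (rule per_int[OF per])
    then have "f (fr x) = f x" unfolding fr_def by simp
    then show "f x = Complex (hr x) (hi x)" using \<open>Q x\<close> unfolding Q_def hr_def hi_def by simp
  qed
  then show ?thesis by (rule that[OF hm(1) hm(2) \<open>periodic1 hr\<close> \<open>periodic1 hi\<close>])
qed


lemma final_assembly:
  fixes f :: "real \<Rightarrow> complex" and hr hi :: "real \<Rightarrow> real"
  assumes Hr: "hyp hr C' \<alpha>" and Hi: "hyp hi C' \<alpha>"
    and aeG: "AE x in lborel. f x = Complex (hr x) (hi x)"
  shows "AE \<xi> in lborel. (\<lambda>N. (\<Sum>n=1..N. f (2 ^ n * \<xi> - \<xi>)) / of_nat N)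
           \<longlonglongrightarrow> Complex (\<integral>x. hr x \<partial>P) (\<integral>x. hi x \<partial>P)"
proof -
  have ae_n: "AE \<xi> in lborel. 1 \<le> n \<longrightarrow> f (real (an n) * \<xi>) = Complex (hr (real (an n) * \<xi>)) (hi (real (an n) * \<xi>))" for n
  proof (cases "1 \<le> n")
    case True
    then have "real (an n) \<noteq> 0" using an_ge1[of n] by simp
    from AE_affine[OF this aeG, of 0] show ?thesis by simp
  qed simp
  then have ae_all: "AE \<xi> in lborel. \<forall>n. 1 \<le> n \<longrightarrow> f (real (an n) * \<xi>) = Complex (hr (real (an n) * \<xi>)) (hi (real (an n) * \<xi>))"
    by (subst AE_all_countable) simp
  show ?thesis
    using ae_all full_real[OF Hr] full_real[OF Hi]
  proof eventually_elim
    case (elim \<xi>)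
    have eq: "(\<Sum>n=1..N. f (2 ^ n * \<xi> - \<xi>)) / of_nat N
        = Complex ((\<Sum>n\<in>{1..N}. hr (real (an n) * \<xi>)) / real N) ((\<Sum>n\<in>{1..N}. hi (real (an n) * \<xi>)) / real N)" for N
    proof -
      have "(\<Sum>n=1..N. f (2 ^ n * \<xi> - \<xi>)) = (\<Sum>n=1..N. Complex (hr (real (an n) * \<xi>)) (hi (real (an n) * \<xi>)))"
      proof (rule sum.cong[OF refl])
        fix n assume "n \<in> {1..N}"
        moreover have "2 ^ n * \<xi> - \<xi> = real (an n) * \<xi>" by (simp add: real_an algebra_simps)
        ultimately show "f (2 ^ n * \<xi> - \<xi>) = Complex (hr (real (an n) * \<xi>)) (hi (real (an n) * \<xi>))"
          using elim(1) by auto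
      qed
      then show ?thesis by (simp add: complex_eq_iff Re_divide_of_nat Im_divide_of_nat)
    qed
    show ?case unfolding eq by (intro tendsto_Complex elim(2) elim(3))
  qed
qed


lemma transl_meas: "(\<lambda>x::real. x + d) \<in> lebesgue \<rightarrow>\<^sub>M lebesgue"
  using lebesgue_affine_measurable[where c="\<lambda>x::real. 1" and t=d] by (simp add: add.commute)

lemma mod_G:
  fixes f G :: "real \<Rightarrow> complex"
  assumes fm: "f \<in> borel_measurable lebesgue" and Gm[measurable]: "G \<in> borel_measurable borel"
    and Gper: "periodic1 G" and Gint: "integrable P (\<lambda>x. cmod (G x))"
    and ae: "AE x in lborel. f x = G x"
  shows "integrable P (\<lambda>x. cmod (G (x + d) - G x))"
    "L1_modulus f d = (\<integral>x. cmod (G (x + d) - G x) \<partial>P)"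
proof -
  have I1: "integrable P (\<lambda>x. cmod (G (x + d)))"
    using shift_integrable[of "\<lambda>x. cmod (G x)" d] Gper Gint by (simp add: periodic1_def)
  show I: "integrable P (\<lambda>x. cmod (G (x + d) - G x))"
  proof (rule Bochner_Integration.integrable_bound)
    show "integrable P (\<lambda>x. cmod (G (x + d)) + cmod (G x))" using I1 Gint by simp
    show "AE x in P. norm (cmod (G (x + d) - G x)) \<le> norm (cmod (G (x + d)) + cmod (G x))"
      by (rule AE_I2) (simp add: norm_triangle_ineq4)
  qed simp
  have um: "(\<lambda>x. cmod (f (x + d) - f x)) \<in> borel_measurable lebesgue"
  proof -
    have "(\<lambda>x. f (x + d)) \<in> borel_measurable lebesgue"
      using measurable_compose[OF transl_meas fm] by (simp add: comp_def)
    then show ?thesis using fm by measurable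
  qed
  have vm: "(\<lambda>x. cmod (G (x + d) - G x)) \<in> borel_measurable lebesgue"
    by (rule measurable_completion) simp
  have ae2: "AE x in lborel. f (d + 1 * x) = G (d + 1 * x)" by (rule AE_affine[OF _ ae]) simp
  have ae3: "AE x in lborel. cmod (f (x + d) - f x) = cmod (G (x + d) - G x)"
    using ae ae2 by eventually_elim (simp add: add.commute)
  have "L1_modulus f d = (LINT x:{0..1}|lebesgue. cmod (G (x + d) - G x))"
    unfolding L1_modulus_def by (rule leb_cong(2)[OF um vm ae3])
  also have "\<dots> = (\<integral>x. cmod (G (x + d) - G x) \<partial>P)" by (rule leb_to_P(2)) simp
  finally show "L1_modulus f d = (\<integral>x. cmod (G (x + d) - G x) \<partial>P)" .
qed


lemma abs_le_sq2: fixes x :: real shows "\<bar>x\<bar> \<le> 1 + x^2"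
proof (cases "\<bar>x\<bar> \<le> 1")
  case True
  moreover have "0 \<le> x^2" by simp
  ultimately show ?thesis by linarith
next
  case False
  then have "\<bar>x\<bar> * 1 \<le> \<bar>x\<bar> * \<bar>x\<bar>" by (intro mult_left_mono) auto
  then show ?thesis by (simp add: abs_mult_self_eq power2_eq_square)
qed

lemma build_hyp:
  fixes f G :: "real \<Rightarrow> complex" and hp :: "real \<Rightarrow> real"
  assumes fm: "f \<in> borel_measurable lebesgue" and Gm[measurable]: "G \<in> borel_measurable borel"
    and Gper: "periodic1 G" and GL2: "integrable P (\<lambda>x. (cmod (G x))^2)"
    and ae: "AE x in lborel. f x = G x"
    and hpm[measurable]: "hp \<in> borel_measurable borel" and hpper: "periodic1 hp"
    and hpd: "\<And>x y. \<bar>hp x - hp y\<bar> \<le> cmod (G x - G y)" and hpa: "\<And>x. \<bar>hp x\<bar> \<le> cmod (G x)"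
    and c: "0 < c" and d0: "0 < d0" and alpha: "1/2 < \<alpha>"
    and bnd: "\<And>\<delta>. 0 < \<delta> \<Longrightarrow> \<delta> < d0 \<Longrightarrow> \<bar>L1_modulus f \<delta>\<bar> \<le> c * \<delta> powr \<alpha>"
  shows "hyp hp (c + 2 * (\<integral>x. cmod (G x) \<partial>P) / d0 powr \<alpha>) \<alpha>"
proof -
  define Lg where "Lg = (\<integral>x. cmod (G x) \<partial>P)"
  have Lg0: "0 \<le> Lg" unfolding Lg_def by simp
  define C' where "C' = c + 2 * Lg / d0 powr \<alpha>"
  have cC: "c \<le> C'" unfolding C'_def using Lg0 d0 by simp
  have Gint: "integrable P (\<lambda>x. cmod (G x))"
  proof (rule Bochner_Integration.integrable_bound)
    show "integrable P (\<lambda>x. 1 + (cmod (G x))^2)" using GL2 by simp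
    show "AE x in P. norm (cmod (G x)) \<le> norm (1 + (cmod (G x))^2)"
      by (rule AE_I2) (use abs_le_sq2[of "cmod (G _)"] in simp)
  qed simp
  show ?thesis unfolding Lg_def[symmetric] C'_def[symmetric]
  proof
    show "hp \<in> borel_measurable borel" by simp
    show "periodic1 hp" by (rule hpper)
    show "integrable P (\<lambda>x. (hp x)^2)"
    proof (rule Bochner_Integration.integrable_bound[OF GL2])
      show "AE x in P. norm ((hp x)^2) \<le> norm ((cmod (G x))^2)"
      proof (rule AE_I2)
        fix x
        have "\<bar>hp x\<bar>^2 \<le> (cmod (G x))^2" by (rule power_mono[OF hpa]) simp
        then show "norm ((hp x)^2) \<le> norm ((cmod (G x))^2)" by simp
      qed
    qed simp
    show "1/2 < \<alpha>" by (rule alpha)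
    show "0 \<le> C'" using cC c by simp
    fix \<delta> :: real assume \<delta>: "0 < \<delta>" "\<delta> \<le> 1"
    note MG = mod_G[OF fm Gm Gper Gint ae, of \<delta>]
    have "(\<integral>\<^sup>+x. ennreal \<bar>hp (x + \<delta>) - hp x\<bar> \<partial>P) \<le> (\<integral>\<^sup>+x. ennreal (cmod (G (x + \<delta>) - G x)) \<partial>P)"
      by (intro nn_integral_mono ennreal_leI hpd)
    also have "\<dots> = ennreal (L1_modulus f \<delta>)"
      unfolding MG(2) by (rule GC2[OF MG(1)]) simp
    also have "L1_modulus f \<delta> \<le> C' * \<delta> powr \<alpha>"
    proof (cases "\<delta> < d0")
      case True
      have "L1_modulus f \<delta> \<le> c * \<delta> powr \<alpha>" using bnd[OF \<delta>(1) True] by linarith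
      also have "\<dots> \<le> C' * \<delta> powr \<alpha>" using cC by (intro mult_right_mono) auto
      finally show ?thesis .
    next
      case False
      have I1: "integrable P (\<lambda>x. cmod (G (x + \<delta>)))"
        using shift_integrable[of "\<lambda>x. cmod (G x)" \<delta>] Gper Gint by (simp add: periodic1_def)
      have "L1_modulus f \<delta> \<le> (\<integral>x. cmod (G (x + \<delta>)) + cmod (G x) \<partial>P)"
        unfolding MG(2) by (intro integral_mono MG(1)) (use I1 Gint in \<open>auto simp: norm_triangle_ineq4\<close>)
      also have "\<dots> = (\<integral>x. cmod (G (x + \<delta>)) \<partial>P) + Lg" unfolding Lg_def using I1 Gint by simp
      also have "(\<integral>x. cmod (G (x + \<delta>)) \<partial>P) = Lg"
        unfolding Lg_def using shift_integral[of "\<lambda>x. cmod (G x)" \<delta>] Gper by (simp add: periodic1_def)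
      finally have L: "L1_modulus f \<delta> \<le> 2 * Lg" by simp
      have "1 \<le> (\<delta> / d0) powr \<alpha>" using False d0 alpha by (intro ge_one_powr_ge_zero) auto
      then have "2 * Lg \<le> 2 * Lg * ((\<delta> / d0) powr \<alpha>)" using Lg0 by (simp add: mult_le_cancel_left1)
      also have "\<dots> = (2 * Lg / d0 powr \<alpha>) * \<delta> powr \<alpha>"
        using d0 \<delta> by (simp add: powr_divide)
      also have "\<dots> \<le> C' * \<delta> powr \<alpha>" unfolding C'_def using c by (intro mult_right_mono) auto
      finally show ?thesis using L by linarith
    qed
    then have "ennreal (L1_modulus f \<delta>) \<le> ennreal (C' * \<delta> powr \<alpha>)" by (rule ennreal_leI)
    finally show "(\<integral>\<^sup>+x. ennreal \<bar>hp (x + \<delta>) - hp x\<bar> \<partial>P) \<le> ennreal (C' * \<delta> powr \<alpha>)" .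
  qed
qed


theorem theorem3p1:
  fixes f :: "real \<Rightarrow> complex" and \<eta> :: real
  assumes "in_L2_torus f"
    and "\<eta> > 0"
    and "(\<lambda>\<delta>. L1_modulus f \<delta>) \<in> O[at_right 0](\<lambda>\<delta>. \<delta> powr (1/2 + \<eta>))"
  shows "AE \<xi> in lebesgue.
           (\<lambda>N. (\<Sum>n=1..N. f (2 ^ n * \<xi> - \<xi>)) / of_nat N)
             \<longlonglongrightarrow> (LINT x:{0..1}|lebesgue. f x)"
proof -
  have per: "periodic1 f" and fm[measurable]: "f \<in> borel_measurable lebesgue"
    and sq: "set_integrable lebesgue {0..1} (\<lambda>x. (cmod (f x))\<^sup>2)"
    using assms(1) unfolding in_L2_torus_def by auto
  define \<alpha> where "\<alpha> = 1/2 + \<eta>"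
  have alpha: "1/2 < \<alpha>" unfolding \<alpha>_def using assms(2) by simp
  obtain hr hi where hrm[measurable]: "hr \<in> borel_measurable borel" and him[measurable]: "hi \<in> borel_measurable borel"
    and hrp: "periodic1 hr" and hip: "periodic1 hi" and aeG0: "AE x in lborel. f x = Complex (hr x) (hi x)"
    by (rule borel_version[OF per fm])
  define G where "G x = Complex (hr x) (hi x)" for x
  have Geq: "G = (\<lambda>x. complex_of_real (hr x) + \<i> * complex_of_real (hi x))"
    unfolding G_def by (rule ext) (simp add: complex_eq_iff)
  have Gm[measurable]: "G \<in> borel_measurable borel" unfolding Geq by measurable
  have Gper: "periodic1 G" using hrp hip unfolding G_def periodic1_def by simp
  have aeG: "AE x in lborel. f x = G x" using aeG0 unfolding G_def .
  have GL2: "integrable P (\<lambda>x. (cmod (G x))^2)"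
  proof -
    have m1: "(\<lambda>x. (cmod (f x))^2) \<in> borel_measurable lebesgue" by measurable
    have m2: "(\<lambda>x. (cmod (G x))^2) \<in> borel_measurable lebesgue" by (rule measurable_completion) simp
    have "AE x in lborel. (cmod (f x))^2 = (cmod (G x))^2" using aeG by (rule eventually_mono) simp
    from leb_cong(1)[OF m1 m2 this] sq have "set_integrable lebesgue {0..1} (\<lambda>x. (cmod (G x))^2)" by simp
    then show ?thesis by (subst (asm) leb_to_P(1)) simp
  qed
  obtain c where c: "c > 0" and ev: "eventually (\<lambda>\<delta>. norm (L1_modulus f \<delta>) \<le> c * norm (\<delta> powr (1/2 + \<eta>))) (at_right 0)"
    using assms(3) by (elim landau_o.bigE)
  obtain d0 :: real where d0: "0 < d0" and d0b: "\<And>\<delta>. 0 < \<delta> \<Longrightarrow> \<delta> < d0 \<Longrightarrow> norm (L1_modulus f \<delta>) \<le> c * norm (\<delta> powr (1/2 + \<eta>))"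
    using ev unfolding eventually_at_right[OF zero_less_one] by auto
  have bnd: "\<bar>L1_modulus f \<delta>\<bar> \<le> c * \<delta> powr \<alpha>" if "0 < \<delta>" "\<delta> < d0" for \<delta>
    using d0b[OF that] unfolding \<alpha>_def by simp
  define C' where "C' = c + 2 * (\<integral>x. cmod (G x) \<partial>P) / d0 powr \<alpha>"
  have Hr: "hyp hr C' \<alpha>" unfolding C'_def
  proof (rule build_hyp[OF fm Gm Gper GL2 aeG hrm hrp _ _ c d0 alpha bnd])
    fix x y show "\<bar>hr x - hr y\<bar> \<le> cmod (G x - G y)"
      using abs_Re_le_cmod[of "G x - G y"] unfolding G_def by simp
  next
    fix x show "\<bar>hr x\<bar> \<le> cmod (G x)" using abs_Re_le_cmod[of "G x"] unfolding G_def by simp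
  qed auto
  have Hi: "hyp hi C' \<alpha>" unfolding C'_def
  proof (rule build_hyp[OF fm Gm Gper GL2 aeG him hip _ _ c d0 alpha bnd])
    fix x y show "\<bar>hi x - hi y\<bar> \<le> cmod (G x - G y)"
      using abs_Im_le_cmod[of "G x - G y"] unfolding G_def by simp
  next
    fix x show "\<bar>hi x\<bar> \<le> cmod (G x)" using abs_Im_le_cmod[of "G x"] unfolding G_def by simp
  qed auto
  have lim: "AE \<xi> in lborel. (\<lambda>N. (\<Sum>n=1..N. f (2 ^ n * \<xi> - \<xi>)) / of_nat N)
           \<longlonglongrightarrow> Complex (\<integral>x. hr x \<partial>P) (\<integral>x. hi x \<partial>P)"
    by (rule final_assembly[OF Hr Hi aeG0])
  have val: "(LINT x:{0..1}|lebesgue. f x) = Complex (\<integral>x. hr x \<partial>P) (\<integral>x. hi x \<partial>P)"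
  proof -
    have m2: "G \<in> borel_measurable lebesgue" by (rule measurable_completion) simp
    have "(LINT x:{0..1}|lebesgue. f x) = (LINT x:{0..1}|lebesgue. G x)"
      by (rule leb_cong(2)[OF fm m2 aeG])
    also have "\<dots> = (\<integral>x. G x \<partial>P)" by (rule leb_to_P(2)) simp
    also have "\<dots> = Complex (\<integral>x. hr x \<partial>P) (\<integral>x. hi x \<partial>P)"
    proof -
      have Gint: "integrable P (\<lambda>x. cmod (G x))"
      proof (rule Bochner_Integration.integrable_bound)
        show "integrable P (\<lambda>x. 1 + (cmod (G x))^2)" using GL2 by simp
        show "AE x in P. norm (cmod (G x)) \<le> norm (1 + (cmod (G x))^2)"
          by (rule AE_I2) (use abs_le_sq2[of "cmod (G _)"] in simp)
      qed simp
      then have GI: "integrable P G" by (simp add: integrable_norm_iff)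
      have "Re (\<integral>x. G x \<partial>P) = (\<integral>x. hr x \<partial>P)"
        using integral_Re[OF GI] unfolding G_def by simp
      moreover have "Im (\<integral>x. G x \<partial>P) = (\<integral>x. hi x \<partial>P)"
        using integral_Im[OF GI] unfolding G_def by simp
      ultimately show ?thesis by (simp add: complex_eq_iff)
    qed
    finally show ?thesis .
  qed
  show ?thesis unfolding val by (rule AE_completion[OF lim])
qed


end
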